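(* Let $g_{ii}(u)$ be a metric of the strictly hyperbolic DN system $u^i_t=v^i(u)u^i_x$, $i=1,\dots,n$, whose curvature tensor has the special form $$R^{ik}_{ik}=w^i_{(1)}+w^k_{(1)}+w^i_{(2)}v^k+w^k_{(2)}v^i,\qquad i\neq k,$$ where $w^i_{(1)},w^i_{(2)}$ are affinors of $g$. Let $B_t=A_x$, $N_t=M_x$ be conservation laws with $BM-AN\neq 0$, and consider the reciprocal transformation $d\hat x=B\,dx+A\,dt$, $d\hat t=N\,dx+M\,dt$. Let $T^{(l)},Z^{(l)}$ ($l=1,2$) be functions with $\partial_iT^{(l)}=w^i_{(l)}\partial_iB$ and $\partial_iZ^{(l)}=w^i_{(l)}\partial_iN$ for all $i$. Define $$n^i=\nabla^i\nabla_iN+w^i_{(1)}N+Z^{(1)}+w^i_{(2)}M+v^iZ^{(2)},\qquad b^i=\nabla^i\nabla_iB+w^i_{(1)}B+T^{(1)}+w^i_{(2)}A+v^iT^{(2)},$$ $$Q=\tfrac12(\nabla B)^2+BT^{(1)}+AT^{(2)},\qquad \mathcal R=\tfrac12(\nabla N)^2+NZ^{(1)}+MZ^{(2)},$$ and let $P,S$ be functions with $$P+S=\langle\nabla N,\nabla B\rangle+T^{(1)}N+T^{(2)}M+Z^{(1)}B+Z^{(2)}A.$$ Set $$\hat n^i=\frac{H_i}{\hat H_i}n^i-P-\hat v^i\mathcal R,\qquad \hat b^i=\frac{H_i}{\hat H_i}b^i-Q-\hat v^iS,$$ where $\hat H_i=\sqrt{\hat g_{ii}}$, so that $H_i/\hat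 H_i=(BM-AN)/(M-Nv^i)$. Then the only possibly nonzero components of the Riemannian curvature tensor of the reciprocal metric $\hat g_{ii}$ are $$\hat R^{ik}_{ik}=\hat n^i\hat v^k+\hat n^k\hat v^i+\hat b^i+\hat b^k,\qquad i\neq k.$$
   Context: Setting: $u=(u^1,\dots,u^n)$ and $u^i_t=v^i(u)u^i_x$, $i=1,\dots,n$, is a hydrodynamic type system in Riemann invariants with smooth real, pairwise distinct characteristic velocities $v^i$ (strict hyperbolicity). We work with smooth rapidly decreasing functions of $x$, so that $(d/dx)^{-1}f_x=f$. The system is an integrable Dubrovin–Novikov (DN) system, i.e. it has a local Hamiltonian structure of hydrodynamic type defined by a flat non-degenerate diagonal metric. Write $\partial_i=\partial/\partial u^i$. A metric of the system is a non-degenerate diagonal metric $g_{ii}(u)$ such that, for suitable functions $f^i(u^i)$ of one variable, $f^ig_{ii}$ is a flat metric of a local Hamiltonian structure of the system. Equivalently, its Lamé coefficients $H_i=\sqrt{g_{ii}}$ satisfy $\partial_j\ln H_i=\partial_jv^i/(v^j-v^i)$ for $i\neq j$. We write $g^{ii}=1/g_{ii}$, and $\Gamma^i_{jk}$ for the Christoffel symbols. For such a metric, the only possibly nonzero curvature components are $R^{ik}_{ik}$, $i\neq k$. An affinor of $g$ is a function $w^i(u)$ with $\partial_jw^i/(w^j-w^i)=\partial_j\ln H_i$ for all $i\neq j$. Conservation law: a pair of functions with $B(u)_t=A(u)_x$ on solutions, i.e. $\partial_iA=v^i\partial_iB$ for all $i$. Reciprocal transformation: $d\hat x=B\,dx+A\,dt$,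 $d\hat t=N\,dx+M\,dt$. The reciprocal system is $u^i_{\hat t}=\hat v^iu^i_{\hat x}$ with $$\hat v^i=\frac{Bv^i-A}{M-Nv^i},$$ and the reciprocal metric is $$\hat g_{ii}=\Big(\frac{M-Nv^i}{BM-AN}\Big)^2g_{ii}.$$ Notation: - $(\nabla B)^2=\sum_mg^{mm}(\partial_mB)^2$; - $\langle\nabla B,\nabla N\rangle=\sum_mg^{mm}\partial_mB\,\partial_mN$; - $\nabla^i\nabla_iB=g^{ii}\big(\partial_i^2B-\sum_m\Gamma^m_{ii}\partial_mB\big)$ (no summation over $i$). *)

theory Defs
  imports "HOL-Analysis.Analysis"
begin

definition pd :: "'n::finite \<Rightarrow> (real^'n \<Rightarrow> real) \<Rightarrow> real^'n \<Rightarrow> real" where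
  "pd i f u = deriv (\<lambda>t. f (u + t *\<^sub>R axis i 1)) 0"

fun iter_pd :: "'n::finite list \<Rightarrow> (real^'n \<Rightarrow> real) \<Rightarrow> real^'n \<Rightarrow> real" where
  "iter_pd [] f = f"
| "iter_pd (i # is) f = pd i (iter_pd is f)"

definition smooth_on :: "(real^'n::finite) set \<Rightarrow> (real^'n \<Rightarrow> real) \<Rightarrow> bool" where
  "smooth_on U f \<longleftrightarrow> (\<forall>is. iter_pd is f differentiable_on U)"

text \<open>A diagonal metric is given by its diagonal entries g i = g_ii.\<close>
definition diag_full :: "('n \<Rightarrow> real^'n \<Rightarrow> real) \<Rightarrow> 'n \<Rightarrow> 'n \<Rightarrow> real^'n \<Rightarrow> real" where
  "diag_full g a b = (if a = b then g a else (\<lambda>_. 0))"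

definition christoffel :: "('n::finite \<Rightarrow> real^'n \<Rightarrow> real) \<Rightarrow> 'n \<Rightarrow> 'n \<Rightarrow> 'n \<Rightarrow> real^'n \<Rightarrow> real" where
  "christoffel g i j k u = 1/2 * (1 / g i u) *
     (pd j (diag_full g i k) u + pd k (diag_full g i j) u - pd i (diag_full g j k) u)"

text \<open>Riemann tensor R^i_{jkl}, with R(d_k,d_l) d_j = R^i_{jkl} d_i.\<close>
definition riemann :: "('n::finite \<Rightarrow> real^'n \<Rightarrow> real) \<Rightarrow> 'n \<Rightarrow> 'n \<Rightarrow> 'n \<Rightarrow> 'n \<Rightarrow> real^'n \<Rightarrow> real" where
  "riemann g i j k l u =
     pd k (christoffel g i l j) u - pd l (christoffel g i k j) u
     + (\<Sum>m\<in>UNIV. christoffel g i k m u * christoffel g m l j u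
                  - christoffel g i l m u * christoffel g m k j u)"

text \<open>Mixed components R^{ij}_{kl} = g^{jj} R^i_{jkl}; in particular R^{ik}_{ik}
  (the sectional curvature of the coordinate plane (i,k); positive for the round sphere).\<close>
definition curv :: "('n::finite \<Rightarrow> real^'n \<Rightarrow> real) \<Rightarrow> 'n \<Rightarrow> 'n \<Rightarrow> 'n \<Rightarrow> 'n \<Rightarrow> real^'n \<Rightarrow> real" where
  "curv g i j k l u = (1 / g j u) * riemann g i j k l u"

text \<open>Lame condition: d_j ln H_i = d_j v^i/(v^j - v^i), with ln H_i = (1/2) ln |g_ii|.\<close>
definition lame_cond :: "(real^'n::finite) set \<Rightarrow> ('n \<Rightarrow> real^'n \<Rightarrow> real) \<Rightarrow> ('n \<Rightarrow> real^'n \<Rightarrow> real) \<Rightarrow> bool" where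
  "lame_cond U v g \<longleftrightarrow> (\<forall>u\<in>U. \<forall>i j. i \<noteq> j \<longrightarrow>
      pd j (g i) u / (2 * g i u) = pd j (v i) u / (v j u - v i u))"

definition diag_metric :: "(real^'n::finite) set \<Rightarrow> ('n \<Rightarrow> real^'n \<Rightarrow> real) \<Rightarrow> bool" where
  "diag_metric U g \<longleftrightarrow> (\<forall>i. smooth_on U (g i)) \<and> (\<forall>u\<in>U. \<forall>i. g i u \<noteq> 0)"

text \<open>A metric of the system (via the Lame characterisation).\<close>
definition metric_of_system where
  "metric_of_system U v g \<longleftrightarrow> diag_metric U g \<and> lame_cond U v g"

definition flat :: "(real^'n::finite) set \<Rightarrow> ('n \<Rightarrow> real^'n \<Rightarrow> real) \<Rightarrow> bool" where
  "flat U g \<longleftrightarrow> (\<forall>u\<in>U. \<forall>i j k l. riemann g i j k l u = 0)"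

definition strictly_hyperbolic where
  "strictly_hyperbolic U v \<longleftrightarrow> (\<forall>i. smooth_on U (v i)) \<and>
     (\<forall>u\<in>U. \<forall>i j. i \<noteq> j \<longrightarrow> v i u \<noteq> v j u)"

text \<open>DN system: it has a local Hamiltonian structure of hydrodynamic type given by a flat
  non-degenerate diagonal metric (Tsarev: Lame condition plus flatness).\<close>
definition DN_system where
  "DN_system U v \<longleftrightarrow> (\<exists>G. metric_of_system U v G \<and> flat U G)"

definition is_affinor :: "(real^'n::finite) set \<Rightarrow> ('n \<Rightarrow> real^'n \<Rightarrow> real) \<Rightarrow> ('n \<Rightarrow> real^'n \<Rightarrow> real) \<Rightarrow> bool" where
  "is_affinor U g w \<longleftrightarrow> (\<forall>i. smooth_on U (w i)) \<and>
     (\<forall>u\<in>U. \<forall>i j. i \<noteq> j \<longrightarrow> pd j (w i) u = (w j u - w i u) * (pd j (g i) u / (2 * g i u)))"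

text \<open>Conservation law B_t = A_x: d_i A = v^i d_i B.\<close>
definition conservation_law where
  "conservation_law U v B A \<longleftrightarrow> smooth_on U B \<and> smooth_on U A \<and>
     (\<forall>u\<in>U. \<forall>i. pd i A u = v i u * pd i B u)"

definition grad_sq :: "('n::finite \<Rightarrow> real^'n \<Rightarrow> real) \<Rightarrow> (real^'n \<Rightarrow> real) \<Rightarrow> real^'n \<Rightarrow> real" where
  "grad_sq g B u = (\<Sum>m\<in>UNIV. (1 / g m u) * (pd m B u)^2)"

definition grad_inner :: "('n::finite \<Rightarrow> real^'n \<Rightarrow> real) \<Rightarrow> (real^'n \<Rightarrow> real) \<Rightarrow> (real^'n \<Rightarrow> real) \<Rightarrow> real^'n \<Rightarrow> real" where
  "grad_inner g B N u = (\<Sum>m\<in>UNIV. (1 / g m u) * pd m B u * pd m N u)"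

text \<open>nabla^i nabla_i B (no summation).\<close>
definition lap_ii :: "('n::finite \<Rightarrow> real^'n \<Rightarrow> real) \<Rightarrow> 'n \<Rightarrow> (real^'n \<Rightarrow> real) \<Rightarrow> real^'n \<Rightarrow> real" where
  "lap_ii g i B u = (1 / g i u) *
     (pd i (pd i B) u - (\<Sum>m\<in>UNIV. christoffel g m i i u * pd m B u))"

definition recip_v where
  "recip_v v B A N M i u = (B u * v i u - A u) / (M u - N u * v i u)"

definition recip_g where
  "recip_g g v B A N M i u =
     ((M u - N u * v i u) / (B u * M u - A u * N u))^2 * g i u"

end

theory Submission
  imports Defs
begin


abbreviation ax :: "'n::finite \<Rightarrow> real^'n" where "ax i \<equiv> axis i 1"

lemma line_differentiable:
  fixes f :: "real^'n::finite \<Rightarrow> real"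
  assumes "f differentiable (at x)"
  shows "(\<lambda>t. f (x + t *\<^sub>R ax i)) differentiable (at 0)"
proof -
  have "(\<lambda>t::real. x + t *\<^sub>R ax i) differentiable (at 0)"
    by (intro derivative_intros)
  moreover have "f differentiable (at ((\<lambda>t::real. x + t *\<^sub>R ax i) 0))" using assms by simp
  ultimately show ?thesis using differentiable_chain_at[of "\<lambda>t::real. x + t *\<^sub>R ax i" 0 f]
    by (simp add: o_def)
qed

lemma pd_DERIV:
  assumes "f differentiable (at x)"
  shows "((\<lambda>t. f (x + t *\<^sub>R ax i)) has_real_derivative pd i f x) (at 0)"
  using line_differentiable[OF assms] DERIV_deriv_iff_real_differentiable
  unfolding pd_def by blast

lemma pd_eqI:
  assumes "((\<lambda>t. f (x + t *\<^sub>R ax i)) has_real_derivative D) (at 0)"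
  shows "pd i f x = D"
  using assms unfolding pd_def by (rule DERIV_imp_deriv)

lemma pd_const[simp]: "pd i (\<lambda>y. c) x = 0"
  by (rule pd_eqI) (rule DERIV_const)

lemma pd_add[simp]:
  "f differentiable (at x) \<Longrightarrow> g differentiable (at x) \<Longrightarrow>
   pd i (\<lambda>y. f y + g y) x = pd i f x + pd i g x"
  by (rule pd_eqI) (intro DERIV_add pd_DERIV)

lemma pd_diff[simp]:
  "f differentiable (at x) \<Longrightarrow> g differentiable (at x) \<Longrightarrow>
   pd i (\<lambda>y. f y - g y) x = pd i f x - pd i g x"
  by (rule pd_eqI) (intro DERIV_diff pd_DERIV)

lemma pd_minus[simp]:
  "f differentiable (at x) \<Longrightarrow> pd i (\<lambda>y. - f y) x = - pd i f x"
  by (rule pd_eqI) (intro DERIV_minus pd_DERIV)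

lemma pd_mult[simp]:
  "f differentiable (at x) \<Longrightarrow> g differentiable (at x) \<Longrightarrow>
   pd i (\<lambda>y. f y * g y) x = pd i f x * g x + f x * pd i g x"
  by (rule pd_eqI) (rule DERIV_cong[OF DERIV_mult[OF pd_DERIV pd_DERIV]], auto)

lemma pd_divide[simp]:
  "f differentiable (at x) \<Longrightarrow> g differentiable (at x) \<Longrightarrow> g x \<noteq> 0 \<Longrightarrow>
   pd i (\<lambda>y. f y / g y) x = (pd i f x * g x - f x * pd i g x) / (g x)^2"
  apply (rule pd_eqI)
  apply (rule DERIV_cong[OF DERIV_divide[OF pd_DERIV pd_DERIV]])
  apply (auto simp: power2_eq_square)
  done

lemma pd_power2[simp]:
  "f differentiable (at x) \<Longrightarrow> pd i (\<lambda>y. (f y)^2) x = 2 * f x * pd i f x"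
proof -
  assume a: "f differentiable (at x)"
  have "pd i (\<lambda>y. (f y)^2) x = pd i (\<lambda>y. f y * f y) x" by (simp add: power2_eq_square)
  also have "\<dots> = 2 * f x * pd i f x" using a by simp
  finally show ?thesis .
qed

lemma pd_local:
  assumes "open U" "x \<in> U" "\<forall>y\<in>U. f y = g y"
  shows "pd i f x = pd i g x"
proof -
  have "((\<lambda>t::real. x + t *\<^sub>R ax i) \<longlongrightarrow> x + 0 *\<^sub>R ax i) (nhds 0)"
    by (intro tendsto_intros filterlim_ident)
  hence "((\<lambda>t::real. x + t *\<^sub>R ax i) \<longlongrightarrow> x) (nhds 0)" by simp
  hence "eventually (\<lambda>t. x + t *\<^sub>R ax i \<in> U) (nhds 0)"
    using assms(1,2) unfolding tendsto_def by blast
  hence "eventually (\<lambda>t. f (x + t *\<^sub>R ax i) = g (x + t *\<^sub>R ax i)) (nhds 0)"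
    by eventually_elim (use assms in auto)
  thus ?thesis unfolding pd_def by (rule deriv_cong_ev) simp
qed

lemma iter_pd_snoc: "iter_pd (is @ [i]) f = iter_pd is (pd i f)"
  by (induct "is") auto

definition Sk :: "(real^'n::finite) set \<Rightarrow> nat \<Rightarrow> (real^'n \<Rightarrow> real) \<Rightarrow> bool" where
  "Sk U k f \<longleftrightarrow> (\<forall>is. length is \<le> k \<longrightarrow> iter_pd is f differentiable_on U)"

lemma smooth_Sk: "smooth_on U f \<longleftrightarrow> (\<forall>k. Sk U k f)"
  unfolding smooth_on_def Sk_def by auto

lemma Sk_0: "Sk U 0 f \<longleftrightarrow> f differentiable_on U"
  unfolding Sk_def by auto

lemma Sk_Suc: "Sk U (Suc k) f \<longleftrightarrow> f differentiable_on U \<and> (\<forall>i. Sk U k (pd i f))"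
proof
  assume a: "Sk U (Suc k) f"
  have "f differentiable_on U" using a unfolding Sk_def by (metis iter_pd.simps(1) le0 list.size(3))
  moreover have "Sk U k (pd i f)" for i
    unfolding Sk_def
  proof (intro allI impI)
    fix "is" :: "'a list" assume "length is \<le> k"
    hence "length (is @ [i]) \<le> Suc k" by simp
    hence "iter_pd (is @ [i]) f differentiable_on U" using a unfolding Sk_def by blast
    thus "iter_pd is (pd i f) differentiable_on U" by (simp add: iter_pd_snoc)
  qed
  ultimately show "f differentiable_on U \<and> (\<forall>i. Sk U k (pd i f))" by blast
next
  assume a: "f differentiable_on U \<and> (\<forall>i. Sk U k (pd i f))"
  show "Sk U (Suc k) f" unfolding Sk_def
  proof (intro allI impI)
    fix "is" :: "'a list" assume l: "length is \<le> Suc k"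
    show "iter_pd is f differentiable_on U"
    proof (cases "is" rule: rev_exhaust)
      case Nil thus ?thesis using a by simp
    next
      case (snoc ys y)
      hence "length ys \<le> k" using l by simp
      hence "iter_pd ys (pd y f) differentiable_on U" using a unfolding Sk_def by blast
      thus ?thesis using snoc by (simp add: iter_pd_snoc)
    qed
  qed
qed

lemma Sk_mono: "Sk U (Suc k) f \<Longrightarrow> Sk U k f"
  unfolding Sk_def by auto

lemma iter_pd_local:
  assumes "open U" "\<forall>y\<in>U. f y = g y"
  shows "\<forall>y\<in>U. iter_pd is f y = iter_pd is g y"
  using assms(2)
proof (induct "is")
  case Nil thus ?case by simp
next
  case (Cons i "is")
  thus ?case using pd_local[OF assms(1)] by simp
qed

lemma diff_on_local:
  assumes "open U" "\<forall>y\<in>U. f y = g y" "f differentiable_on U"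
  shows "g differentiable_on U"
  unfolding differentiable_on_eq_differentiable_at[OF assms(1)]
proof
  fix y assume y: "y \<in> U"
  hence "f differentiable (at y)" using assms(1,3) differentiable_on_eq_differentiable_at by blast
  then obtain f' where "(f has_derivative f') (at y)" unfolding differentiable_def by blast
  hence "(g has_derivative f') (at y)"
    by (rule has_derivative_transform_within_open[OF _ assms(1) y]) (use assms(2) in auto)
  thus "g differentiable (at y)" unfolding differentiable_def by blast
qed

lemma Sk_local:
  assumes "open U" "\<forall>y\<in>U. f y = g y" "Sk U k f"
  shows "Sk U k g"
  unfolding Sk_def
proof (intro allI impI)
  fix "is" :: "'a list" assume "length is \<le> k"
  hence "iter_pd is f differentiable_on U" using assms(3) unfolding Sk_def by blast
  thus "iter_pd is g differentiable_on U"
    using diff_on_local[OF assms(1) iter_pd_local[OF assms(1,2)]] by blast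
qed

lemma smooth_local:
  assumes "open U" "\<forall>y\<in>U. f y = g y" "smooth_on U f"
  shows "smooth_on U g"
  using assms Sk_local smooth_Sk by metis

lemma diff_at: "open U \<Longrightarrow> f differentiable_on U \<Longrightarrow> y \<in> U \<Longrightarrow> f differentiable (at y)"
  using differentiable_on_eq_differentiable_at by blast

lemma Sk_const: "Sk U k (\<lambda>y. c)"
proof (induct k arbitrary: c)
  case 0 thus ?case by (simp add: Sk_0)
next
  case (Suc k)
  have e: "pd i (\<lambda>y. c) = (\<lambda>y. 0)" for i by (rule ext) simp
  have "Sk U k (pd i (\<lambda>y. c))" for i unfolding e by (rule Suc)
  moreover have "(\<lambda>y. c) differentiable_on U" by simp
  ultimately show ?case unfolding Sk_Suc by blast
qed

lemma Sk_add:
  assumes "open U"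
  shows "Sk U k f \<Longrightarrow> Sk U k g \<Longrightarrow> Sk U k (\<lambda>y. f y + g y)"
proof (induct k arbitrary: f g)
  case 0 thus ?case by (simp add: Sk_0 differentiable_on_add)
next
  case (Suc k)
  have df: "f differentiable_on U" "g differentiable_on U" "\<And>i. Sk U k (pd i f)" "\<And>i. Sk U k (pd i g)"
    using Suc.prems by (auto simp: Sk_Suc)
  have "Sk U k (pd i (\<lambda>y. f y + g y))" for i
  proof -
    have s1: "Sk U k (\<lambda>y. pd i f y + pd i g y)" by (rule Suc.hyps[OF df(3) df(4)])
    have s2: "\<forall>y\<in>U. pd i f y + pd i g y = pd i (\<lambda>y. f y + g y) y"
    proof
      fix y assume y: "y \<in> U"
      show "pd i f y + pd i g y = pd i (\<lambda>y. f y + g y) y"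
        using pd_add[OF diff_at[OF assms df(1) y] diff_at[OF assms df(2) y]] by simp
    qed
    show ?thesis by (rule Sk_local[OF assms(1) s2 s1])
  qed
  thus ?case using df unfolding Sk_Suc by (simp add: differentiable_on_add)
qed

lemma Sk_minus:
  assumes "open U"
  shows "Sk U k f \<Longrightarrow> Sk U k (\<lambda>y. - f y)"
proof (induct k arbitrary: f)
  case 0 thus ?case by (simp add: Sk_0 differentiable_on_minus)
next
  case (Suc k)
  have df: "f differentiable_on U" "\<And>i. Sk U k (pd i f)"
    using Suc.prems by (auto simp: Sk_Suc)
  have "Sk U k (pd i (\<lambda>y. - f y))" for i
  proof -
    have s1: "Sk U k (\<lambda>y. - pd i f y)" by (rule Suc.hyps[OF df(2)])
    have s2: "\<forall>y\<in>U. - pd i f y = pd i (\<lambda>y. - f y) y"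
      using pd_minus[OF diff_at[OF assms df(1)]] by simp
    show ?thesis by (rule Sk_local[OF assms(1) s2 s1])
  qed
  thus ?case using df unfolding Sk_Suc by (simp add: differentiable_on_minus)
qed

lemma Sk_mult:
  assumes "open U"
  shows "Sk U k f \<Longrightarrow> Sk U k g \<Longrightarrow> Sk U k (\<lambda>y. f y * g y)"
proof (induct k arbitrary: f g)
  case 0 thus ?case by (simp add: Sk_0 differentiable_on_mult)
next
  case (Suc k)
  have df: "f differentiable_on U" "g differentiable_on U" "\<And>i. Sk U k (pd i f)" "\<And>i. Sk U k (pd i g)"
    "Sk U k f" "Sk U k g"
    using Suc.prems by (auto simp: Sk_Suc intro: Sk_mono)
  have "Sk U k (pd i (\<lambda>y. f y * g y))" for i
  proof -
    have s1: "Sk U k (\<lambda>y. pd i f y * g y + f y * pd i g y)"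
      by (rule Sk_add[OF assms, OF Suc.hyps[OF df(3) df(6)] Suc.hyps[OF df(5) df(4)]])
    have s2: "\<forall>y\<in>U. pd i f y * g y + f y * pd i g y = pd i (\<lambda>y. f y * g y) y"
    proof
      fix y assume y: "y \<in> U"
      show "pd i f y * g y + f y * pd i g y = pd i (\<lambda>y. f y * g y) y"
        using pd_mult[OF diff_at[OF assms df(1) y] diff_at[OF assms df(2) y]] by simp
    qed
    show ?thesis by (rule Sk_local[OF assms(1) s2 s1])
  qed
  thus ?case unfolding Sk_Suc using differentiable_on_mult[OF df(1) df(2)] by blast
qed

lemma Sk_inverse:
  assumes U: "open U" and nz: "\<forall>y\<in>U. f y \<noteq> 0"
  shows "Sk U k f \<Longrightarrow> Sk U k (\<lambda>y. 1 / f y)"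
proof (induct k)
  case 0
  hence "f differentiable_on U" by (simp add: Sk_0)
  hence "(\<lambda>y. 1 / f y) differentiable_on U"
    unfolding differentiable_on_eq_differentiable_at[OF U] using nz by simp
  thus ?case by (simp add: Sk_0)
next
  case (Suc k)
  have df: "f differentiable_on U" "\<And>i. Sk U k (pd i f)" "Sk U k f"
    using Suc.prems by (auto simp: Sk_Suc intro: Sk_mono)
  have IH: "Sk U k (\<lambda>y. 1 / f y)" by (rule Suc.hyps[OF df(3)])
  have "Sk U k (pd i (\<lambda>y. 1 / f y))" for i
  proof -
    have s1: "Sk U k (\<lambda>y. - pd i f y * ((1 / f y) * (1 / f y)))"
      by (intro Sk_minus[OF U] Sk_mult[OF U] df IH)
    have s2: "\<forall>y\<in>U. - pd i f y * ((1 / f y) * (1 / f y)) = pd i (\<lambda>y. 1 / f y) y"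
    proof
      fix y assume y: "y \<in> U"
      have "pd i (\<lambda>y. 1 / f y) y = (pd i (\<lambda>y. 1) y * f y - 1 * pd i f y) / (f y)^2"
        by (rule pd_divide) (use diff_at[OF U df(1) y] nz y in auto)
      thus "- pd i f y * ((1 / f y) * (1 / f y)) = pd i (\<lambda>y. 1 / f y) y"
        by (simp add: power2_eq_square)
    qed
    show ?thesis by (rule Sk_local[OF U s2 s1])
  qed
  moreover have "(\<lambda>y. 1 / f y) differentiable_on U"
    unfolding differentiable_on_eq_differentiable_at[OF U] using nz diff_at[OF U df(1)] by simp
  ultimately show ?case unfolding Sk_Suc by blast
qed

lemma smooth_add: "open U \<Longrightarrow> smooth_on U f \<Longrightarrow> smooth_on U g \<Longrightarrow> smooth_on U (\<lambda>y. f y + g y)"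
  unfolding smooth_Sk using Sk_add by blast
lemma smooth_minus: "open U \<Longrightarrow> smooth_on U f \<Longrightarrow> smooth_on U (\<lambda>y. - f y)"
  unfolding smooth_Sk using Sk_minus by blast
lemma smooth_mult: "open U \<Longrightarrow> smooth_on U f \<Longrightarrow> smooth_on U g \<Longrightarrow> smooth_on U (\<lambda>y. f y * g y)"
  unfolding smooth_Sk using Sk_mult by blast
lemma smooth_const: "smooth_on U (\<lambda>y. c)"
  unfolding smooth_Sk using Sk_const by blast
lemma smooth_inverse: "open U \<Longrightarrow> \<forall>y\<in>U. f y \<noteq> 0 \<Longrightarrow> smooth_on U f \<Longrightarrow> smooth_on U (\<lambda>y. 1 / f y)"
  unfolding smooth_Sk using Sk_inverse by blast
lemma smooth_diff: "open U \<Longrightarrow> smooth_on U f \<Longrightarrow> smooth_on U g \<Longrightarrow> smooth_on U (\<lambda>y. f y - g y)"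
  using smooth_add[of U f "\<lambda>y. - g y"] smooth_minus[of U g] by simp
lemma smooth_divide: "open U \<Longrightarrow> \<forall>y\<in>U. g y \<noteq> 0 \<Longrightarrow> smooth_on U f \<Longrightarrow> smooth_on U g \<Longrightarrow> smooth_on U (\<lambda>y. f y / g y)"
  using smooth_mult[of U f "\<lambda>y. 1 / g y"] smooth_inverse[of U g] by simp
lemma smooth_power2: "open U \<Longrightarrow> smooth_on U f \<Longrightarrow> smooth_on U (\<lambda>y. (f y)^2)"
  unfolding power2_eq_square by (rule smooth_mult)
lemma smooth_pd: "smooth_on U f \<Longrightarrow> smooth_on U (pd i f)"
  unfolding smooth_Sk using Sk_Suc by blast
lemma smooth_diff_at: "open U \<Longrightarrow> smooth_on U f \<Longrightarrow> y \<in> U \<Longrightarrow> f differentiable (at y)"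
  unfolding smooth_Sk using Sk_0 diff_at by blast


lemma line_DERIV_at:
  assumes "f differentiable (at (p + s *\<^sub>R ax k))"
  shows "((\<lambda>t. f (p + t *\<^sub>R ax k)) has_real_derivative pd k f (p + s *\<^sub>R ax k)) (at s)"
proof -
  have "((\<lambda>t. f ((p + s *\<^sub>R ax k) + t *\<^sub>R ax k)) has_real_derivative pd k f (p + s *\<^sub>R ax k)) (at 0)"
    by (rule pd_DERIV[OF assms])
  moreover have "(\<lambda>t. f ((p + s *\<^sub>R ax k) + t *\<^sub>R ax k)) = (\<lambda>t. f (p + (t + s) *\<^sub>R ax k))"
    by (rule ext) (simp add: algebra_simps scaleR_add_left)
  ultimately have "((\<lambda>t. (\<lambda>t. f (p + t *\<^sub>R ax k)) (t + s)) has_real_derivative pd k f (p + s *\<^sub>R ax k)) (at 0)"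
    by simp
  hence "((\<lambda>t. f (p + t *\<^sub>R ax k)) has_real_derivative pd k f (p + s *\<^sub>R ax k)) (at (0 + s))"
    by (subst DERIV_shift) simp
  thus ?thesis by simp
qed

lemma dist_shift: "dist x (x + v) = norm v" "dist (x + v) x = norm v"
  for x v :: "'a::real_normed_vector"
  by (simp_all add: dist_norm)

lemma mixed_limit:
  fixes f :: "real^'n::finite \<Rightarrow> real"
  assumes U: "open U" and x: "x \<in> U" and sm: "smooth_on U f"
  shows "((\<lambda>h. (f (x + h *\<^sub>R ax a + h *\<^sub>R ax b) - f (x + h *\<^sub>R ax a) - f (x + h *\<^sub>R ax b) + f x) / h^2)
          \<longlongrightarrow> pd b (pd a f) x) (at_right 0)"
proof -
  let ?G = "pd b (pd a f)"
  obtain r where r: "r > 0" "ball x r \<subseteq> U" using U x open_contains_ball by blast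
  have smG: "smooth_on U ?G" using sm by (intro smooth_pd)
  have fd: "\<And>y. y \<in> U \<Longrightarrow> f differentiable (at y)" using smooth_diff_at[OF U sm] .
  have fad: "\<And>y. y \<in> U \<Longrightarrow> pd a f differentiable (at y)" using smooth_diff_at[OF U smooth_pd[OF sm]] .
  have Gc: "isCont ?G x" using smooth_diff_at[OF U smG x] differentiable_imp_continuous_within by blast
  have inball: "x + s *\<^sub>R ax a + t *\<^sub>R ax b \<in> U" if "0 \<le> s" "s \<le> h" "0 \<le> t" "t \<le> h" "2*h < r" for s t h
  proof -
    have "norm (s *\<^sub>R ax a + t *\<^sub>R ax b) \<le> norm (s *\<^sub>R ax a) + norm (t *\<^sub>R ax b)" by (rule norm_triangle_ineq)
    also have "\<dots> = s + t" using that by simp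
    finally have "dist x (x + (s *\<^sub>R ax a + t *\<^sub>R ax b)) < r" using that unfolding dist_shift by simp
    hence "x + (s *\<^sub>R ax a + t *\<^sub>R ax b) \<in> ball x r" by simp
    thus ?thesis using r by (auto simp: add.assoc)
  qed
  show ?thesis unfolding tendsto_iff
  proof (intro allI impI)
    fix e :: real assume e: "e > 0"
    obtain d where d: "d > 0" "\<And>y. dist y x < d \<Longrightarrow> dist (?G y) (?G x) < e"
      using Gc e unfolding continuous_at_eps_delta by blast
    show "eventually (\<lambda>h. dist ((f (x + h *\<^sub>R ax a + h *\<^sub>R ax b) - f (x + h *\<^sub>R ax a) - f (x + h *\<^sub>R ax b) + f x) / h^2) (?G x) < e) (at_right 0)"
      unfolding eventually_at_right_field
    proof (intro exI[of _ "min (r/2) (d/2)"] conjI allI impI)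
      show "0 < min (r/2) (d/2)" using r d by simp
      fix h :: real assume h: "0 < h" "h < min (r/2) (d/2)"
      hence h2: "2*h < r" "2*h < d" by auto
      define \<phi> where "\<phi> s = f (x + h *\<^sub>R ax b + s *\<^sub>R ax a) - f (x + s *\<^sub>R ax a)" for s
      have "\<exists>z. 0 < z \<and> z < h \<and> \<phi> h - \<phi> 0 = (h - 0) *
               (pd a f (x + h *\<^sub>R ax b + z *\<^sub>R ax a) - pd a f (x + z *\<^sub>R ax a))"
        unfolding \<phi>_def
      proof (rule MVT2[OF h(1)])
        fix s assume s: "0 \<le> s" "s \<le> h"
        have i1: "x + h *\<^sub>R ax b + s *\<^sub>R ax a \<in> U" using inball[of s h h] s h h2 by (simp add: add_ac)
        have "x + s *\<^sub>R ax a + 0 *\<^sub>R ax b \<in> U" by (rule inball) (use s h h2 in auto)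
        hence i2: "x + s *\<^sub>R ax a \<in> U" by simp
        show "((\<lambda>s. f (x + h *\<^sub>R ax b + s *\<^sub>R ax a) - f (x + s *\<^sub>R ax a)) has_real_derivative
              pd a f (x + h *\<^sub>R ax b + s *\<^sub>R ax a) - pd a f (x + s *\<^sub>R ax a)) (at s)"
          by (intro DERIV_diff line_DERIV_at fd i1 i2)
      qed
      then obtain \<xi> where xi: "0 < \<xi>" "\<xi> < h"
        "\<phi> h - \<phi> 0 = h * (pd a f (x + h *\<^sub>R ax b + \<xi> *\<^sub>R ax a) - pd a f (x + \<xi> *\<^sub>R ax a))" by auto
      have "\<exists>z. 0 < z \<and> z < h \<and> pd a f (x + \<xi> *\<^sub>R ax a + h *\<^sub>R ax b) - pd a f (x + \<xi> *\<^sub>R ax a + 0 *\<^sub>R ax b) = (h - 0) *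
               ?G (x + \<xi> *\<^sub>R ax a + z *\<^sub>R ax b)"
      proof (rule MVT2[OF h(1)])
        fix t assume t: "0 \<le> t" "t \<le> h"
        have "x + \<xi> *\<^sub>R ax a + t *\<^sub>R ax b \<in> U" by (rule inball) (use t xi h2 in auto)
        thus "((\<lambda>t. pd a f (x + \<xi> *\<^sub>R ax a + t *\<^sub>R ax b)) has_real_derivative ?G (x + \<xi> *\<^sub>R ax a + t *\<^sub>R ax b)) (at t)"
          by (intro line_DERIV_at fad)
      qed
      then obtain \<eta> where eta: "0 < \<eta>" "\<eta> < h"
        "pd a f (x + \<xi> *\<^sub>R ax a + h *\<^sub>R ax b) - pd a f (x + \<xi> *\<^sub>R ax a) = h * ?G (x + \<xi> *\<^sub>R ax a + \<eta> *\<^sub>R ax b)"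
        by auto
      have D: "f (x + h *\<^sub>R ax a + h *\<^sub>R ax b) - f (x + h *\<^sub>R ax a) - f (x + h *\<^sub>R ax b) + f x
             = h^2 * ?G (x + \<xi> *\<^sub>R ax a + \<eta> *\<^sub>R ax b)"
      proof -
        have "f (x + h *\<^sub>R ax a + h *\<^sub>R ax b) - f (x + h *\<^sub>R ax a) - f (x + h *\<^sub>R ax b) + f x = \<phi> h - \<phi> 0"
          unfolding \<phi>_def by (simp add: add_ac)
        also have "\<dots> = h * (h * ?G (x + \<xi> *\<^sub>R ax a + \<eta> *\<^sub>R ax b))"
          using xi(3) eta(3) by (simp add: add_ac)
        finally show ?thesis by (simp add: power2_eq_square)
      qed
      have "dist (x + \<xi> *\<^sub>R ax a + \<eta> *\<^sub>R ax b) x < d"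
      proof -
        have "norm (\<xi> *\<^sub>R ax a + \<eta> *\<^sub>R ax b) \<le> norm (\<xi> *\<^sub>R ax a) + norm (\<eta> *\<^sub>R ax b)" by (rule norm_triangle_ineq)
        also have "\<dots> = \<xi> + \<eta>" using xi eta by simp
        finally have "dist (x + (\<xi> *\<^sub>R ax a + \<eta> *\<^sub>R ax b)) x < d" using xi eta h2 unfolding dist_shift by simp
        thus ?thesis by (simp add: add.assoc)
      qed
      hence "dist (?G (x + \<xi> *\<^sub>R ax a + \<eta> *\<^sub>R ax b)) (?G x) < e" by (rule d(2))
      thus "dist ((f (x + h *\<^sub>R ax a + h *\<^sub>R ax b) - f (x + h *\<^sub>R ax a) - f (x + h *\<^sub>R ax b) + f x) / h^2) (?G x) < e"
        unfolding D using h by simp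
    qed
  qed
qed

lemma clairaut:
  fixes f :: "real^'n::finite \<Rightarrow> real"
  assumes U: "open U" and x: "x \<in> U" and sm: "smooth_on U f"
  shows "pd k (pd l f) x = pd l (pd k f) x"
proof -
  have 1: "((\<lambda>h. (f (x + h *\<^sub>R ax k + h *\<^sub>R ax l) - f (x + h *\<^sub>R ax k) - f (x + h *\<^sub>R ax l) + f x) / h^2)
          \<longlongrightarrow> pd l (pd k f) x) (at_right 0)" by (rule mixed_limit[OF U x sm])
  have 2: "((\<lambda>h. (f (x + h *\<^sub>R ax l + h *\<^sub>R ax k) - f (x + h *\<^sub>R ax l) - f (x + h *\<^sub>R ax k) + f x) / h^2)
          \<longlongrightarrow> pd k (pd l f) x) (at_right 0)" by (rule mixed_limit[OF U x sm])
  have e: "(\<lambda>h. (f (x + h *\<^sub>R ax l + h *\<^sub>R ax k) - f (x + h *\<^sub>R ax l) - f (x + h *\<^sub>R ax k) + f x) / h^2)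
     = (\<lambda>h. (f (x + h *\<^sub>R ax k + h *\<^sub>R ax l) - f (x + h *\<^sub>R ax k) - f (x + h *\<^sub>R ax l) + f x) / h^2)"
    by (rule ext) (simp add: add_ac)
  show ?thesis using tendsto_unique[OF _ 2[unfolded e] 1] by simp
qed


definition aG :: "('n::finite \<Rightarrow> real^'n \<Rightarrow> real) \<Rightarrow> 'n \<Rightarrow> 'n \<Rightarrow> real^'n \<Rightarrow> real" where
  "aG G i j x = pd j (G i) x / (2 * G i x)"

lemma pd_zero_fun[simp]: "pd j (\<lambda>_. 0) x = 0"
  by (rule pd_const)

lemma chris:
  "christoffel G i j k x =
     (if j = i then aG G i k x else if k = i then aG G i j x
      else if j = k then - pd i (G j) x / (2 * G i x) else 0)"
  unfolding christoffel_def diag_full_def aG_def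
  by (auto simp: field_simps)

lemma chris_fun_kk: "k \<noteq> i \<Longrightarrow> christoffel G i k k = (\<lambda>x. - pd i (G k) x / (2 * G i x))"
  by (rule ext) (simp add: chris)

lemma chris_fun_ik: "christoffel G i i k = aG G i k"
  by (rule ext) (simp add: chris)

lemma chris_fun_ki: "christoffel G i k i = aG G i k"
  by (rule ext) (simp add: chris)

lemma sum_split2:
  fixes F :: "'n::finite \<Rightarrow> real"
  assumes "i \<noteq> k"
  shows "sum F UNIV = F i + F k + sum F (UNIV - {i, k})"
proof -
  have "sum F UNIV = F i + sum F (UNIV - {i})" by (simp add: sum.remove)
  also have "sum F (UNIV - {i}) = F k + sum F (UNIV - {i} - {k})"
    using assms by (intro sum.remove) auto
  also have "UNIV - {i} - {k} = UNIV - {i, k}" by auto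
  finally show ?thesis by simp
qed

lemma curv_ikik:
  assumes ik: "i \<noteq> k"
    and d: "G i differentiable (at x)" "G k differentiable (at x)"
       "pd i (G k) differentiable (at x)" "pd k (G i) differentiable (at x)"
    and nz: "\<And>m. G m x \<noteq> 0"
  shows "curv G i k i k x =
     - (1 / G i x) * (pd i (aG G k i) x + (aG G k i x)^2 - aG G k i x * aG G i i x)
     - (1 / G k x) * (pd k (aG G i k) x + (aG G i k x)^2 - aG G i k x * aG G k k x)
     - (\<Sum>m\<in>UNIV - {i, k}. aG G i m x * aG G k m x / G m x)"
proof -
  have ki: "k \<noteq> i" using ik by auto
  have dd: "(\<lambda>y. 2 * G i y) differentiable (at x)" "(\<lambda>y. 2 * G k y) differentiable (at x)"
     "(\<lambda>y. - pd i (G k) y) differentiable (at x)" using d by auto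
  have p1: "pd i (christoffel G i k k) x =
      - ((pd i (pd i (G k)) x * (2 * G i x) - pd i (G k) x * (2 * pd i (G i) x)) / (2 * G i x)^2)"
    unfolding chris_fun_kk[OF ki] using d dd nz by simp
  have p2: "pd i (aG G k i) x =
      (pd i (pd i (G k)) x * (2 * G k x) - pd i (G k) x * (2 * pd i (G k) x)) / (2 * G k x)^2"
    unfolding aG_def[abs_def] using d dd nz by simp
  have p3: "pd k (christoffel G i i k) x = pd k (aG G i k) x" by (simp add: chris_fun_ik)
  have S: "(\<Sum>m\<in>UNIV. christoffel G i i m x * christoffel G m k k x - christoffel G i k m x * christoffel G m i k x)
     = (aG G i i x * (- pd i (G k) x / (2 * G i x)) - aG G i k x * aG G i k x)
       + (aG G i k x * aG G k k x - (- pd i (G k) x / (2 * G i x)) * aG G k i x)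
       + (\<Sum>m\<in>UNIV - {i, k}. aG G i m x * (- pd m (G k) x / (2 * G m x)))"
    apply (subst sum_split2[OF ik])
    apply (intro arg_cong2[where f="(+)"] sum.cong)
    using ik by (auto simp: chris)
  have S2: "(\<Sum>m\<in>UNIV - {i, k}. aG G i m x * (- pd m (G k) x / (2 * G m x)))
      = - G k x * (\<Sum>m\<in>UNIV - {i, k}. aG G i m x * aG G k m x / G m x)"
    unfolding sum_distrib_left
    by (rule sum.cong) (use nz in \<open>auto simp: aG_def field_simps\<close>)
  show ?thesis
    unfolding curv_def riemann_def p1 p3 S S2
    using nz[of i] nz[of k] unfolding p2 aG_def
    by (simp add: field_simps power2_eq_square)
qed

lemma riemann_antisym: "riemann G i j k l x = - riemann G i j l k x"
  unfolding riemann_def by (simp add: sum_subtractf)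

lemma pd_quot_at:
  assumes "f differentiable (at x)" "g differentiable (at x)" "g x \<noteq> 0"
  shows "pd l (\<lambda>y. f y / g y) x = (pd l f x * g x - f x * pd l g x) / (g x)^2"
  using assms by simp

locale lame_setting =
  fixes U :: "(real^'n::finite) set" and G V :: "'n \<Rightarrow> real^'n \<Rightarrow> real"
  assumes U: "open U"
    and smG: "\<And>m. smooth_on U (G m)" and smV: "\<And>m. smooth_on U (V m)"
    and nzG: "\<And>y m. y \<in> U \<Longrightarrow> G m y \<noteq> 0"
    and dist: "\<And>y i j. y \<in> U \<Longrightarrow> i \<noteq> j \<Longrightarrow> V i y \<noteq> V j y"
    and lame: "lame_cond U V G"
begin

lemma dG: "y \<in> U \<Longrightarrow> G m differentiable (at y)" using smooth_diff_at[OF U smG] .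
lemma dV: "y \<in> U \<Longrightarrow> V m differentiable (at y)" using smooth_diff_at[OF U smV] .
lemma dpG: "y \<in> U \<Longrightarrow> pd j (G m) differentiable (at y)" using smooth_diff_at[OF U smooth_pd[OF smG]] .
lemma dpV: "y \<in> U \<Longrightarrow> pd j (V m) differentiable (at y)" using smooth_diff_at[OF U smooth_pd[OF smV]] .

lemma aG_lame: "y \<in> U \<Longrightarrow> i \<noteq> j \<Longrightarrow> aG G i j y = pd j (V i) y / (V j y - V i y)"
  using lame unfolding lame_cond_def aG_def by blast

lemma pd_aG:
  assumes "x \<in> U"
  shows "pd l (aG G i j) x = (pd l (pd j (G i)) x * (2 * G i x) - pd j (G i) x * (2 * pd l (G i) x)) / (2 * G i x)^2"
proof -
  have "(\<lambda>y. 2 * G i y) differentiable (at x)" using dG[OF assms] by simp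
  thus ?thesis unfolding aG_def[abs_def] using dpG[OF assms] dG[OF assms] nzG[OF assms] by simp
qed

lemma pd_aG_lame:
  assumes x: "x \<in> U" and ij: "i \<noteq> j"
  shows "pd l (aG G i j) x = (pd l (pd j (V i)) x * (V j x - V i x) - pd j (V i) x * (pd l (V j) x - pd l (V i) x)) / (V j x - V i x)^2"
proof -
  have "pd l (aG G i j) x = pd l (\<lambda>y. pd j (V i) y / (V j y - V i y)) x"
    by (rule pd_local[OF U x]) (use aG_lame ij in auto)
  also have "\<dots> = (pd l (pd j (V i)) x * (V j x - V i x) - pd j (V i) x * (pd l (V j) x - pd l (V i) x)) / (V j x - V i x)^2"
    using dpV[OF x] dV[OF x] dist[OF x ij] by simp
  finally show ?thesis .
qed

lemma tsarev:
  assumes x: "x \<in> U" and d: "i \<noteq> j" "i \<noteq> l" "j \<noteq> l"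
  shows "pd l (aG G i j) x = aG G i l x * aG G l j x + aG G i j x * aG G j l x - aG G i l x * aG G i j x"
proof -
  have cG: "pd l (pd j (G i)) x = pd j (pd l (G i)) x" by (rule clairaut[OF U x smG])
  have cV: "pd l (pd j (V i)) x = pd j (pd l (V i)) x" by (rule clairaut[OF U x smV])
  have XY: "pd l (aG G i j) x = pd j (aG G i l) x" unfolding pd_aG[OF x] cG by (simp add: algebra_simps)
  define X where "X = pd l (aG G i j) x"
  define W where "W = pd l (pd j (V i)) x"
  have nz1: "V j x - V i x \<noteq> 0" "V l x - V i x \<noteq> 0" "V j x - V l x \<noteq> 0" "V l x - V j x \<noteq> 0" using dist[OF x] d by auto
  have e1: "X = (W * (V j x - V i x) - pd j (V i) x * (pd l (V j) x - pd l (V i) x)) / (V j x - V i x)^2"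
    unfolding X_def W_def by (rule pd_aG_lame[OF x d(1)])
  have e2: "X = (W * (V l x - V i x) - pd l (V i) x * (pd j (V l) x - pd j (V i) x)) / (V l x - V i x)^2"
    unfolding X_def W_def XY cV by (rule pd_aG_lame[OF x d(2)])
  have l1: "pd j (V i) x = aG G i j x * (V j x - V i x)" using aG_lame[OF x d(1)] nz1 by simp
  have l2: "pd l (V i) x = aG G i l x * (V l x - V i x)" using aG_lame[OF x d(2)] nz1 by simp
  have l3: "pd l (V j) x = aG G j l x * (V l x - V j x)" using aG_lame[OF x d(3)] nz1 by (simp add: field_simps)
  have l4: "pd j (V l) x = aG G l j x * (V j x - V l x)" using aG_lame[OF x, of l j] d nz1 by (simp add: field_simps)
  have h1: "X * (V j x - V i x)^2 = W * (V j x - V i x) - pd j (V i) x * (pd l (V j) x - pd l (V i) x)"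
    using e1 nz1 by (simp add: eq_divide_eq)
  have "(X * (V j x - V i x) + aG G i j x * (pd l (V j) x - pd l (V i) x) - W) * (V j x - V i x) = 0"
    using h1 unfolding l1 by algebra
  hence f1: "W = X * (V j x - V i x) + aG G i j x * (pd l (V j) x - pd l (V i) x)"
    using nz1 by simp
  have h2: "X * (V l x - V i x)^2 = W * (V l x - V i x) - pd l (V i) x * (pd j (V l) x - pd j (V i) x)"
    using e2 nz1 by (simp add: eq_divide_eq)
  have "(X * (V l x - V i x) + aG G i l x * (pd j (V l) x - pd j (V i) x) - W) * (V l x - V i x) = 0"
    using h2 unfolding l2 by algebra
  hence f2: "W = X * (V l x - V i x) + aG G i l x * (pd j (V l) x - pd j (V i) x)"
    using nz1 by simp
  have "X * (V j x - V l x) = (aG G i l x * aG G l j x + aG G i j x * aG G j l x - aG G i l x * aG G i j x) * (V j x - V l x)"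
    using f1 f2 unfolding l1 l2 l3 l4 by (simp add: algebra_simps)
  thus ?thesis using nz1(3) unfolding X_def by simp
qed

lemma chris_zero_fun: "i \<noteq> l \<Longrightarrow> i \<noteq> j \<Longrightarrow> l \<noteq> j \<Longrightarrow> christoffel G i l j = (\<lambda>_. 0)"
  by (rule ext) (simp add: chris)

lemma riem_kk: "riemann G i j k k x = 0"
  unfolding riemann_def by simp

lemma riem_ii:
  assumes x: "x \<in> U" and kl: "k \<noteq> l"
  shows "riemann G i i k l x = 0"
proof -
  have c: "pd k (pd l (G i)) x = pd l (pd k (G i)) x" by (rule clairaut[OF U x smG])
  have 1: "pd k (christoffel G i l i) x - pd l (christoffel G i k i) x = 0"
    unfolding chris_fun_ki pd_aG[OF x] c by (simp add: algebra_simps)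
  have 2: "christoffel G i k m x * christoffel G m l i x - christoffel G i l m x * christoffel G m k i x = 0" for m
    using kl by (auto simp: chris aG_def mult_ac)
  show ?thesis unfolding riemann_def using 1 2 by simp
qed

lemma riem_disj:
  assumes ij: "i \<noteq> j" and kl: "k \<noteq> l" and k: "k \<noteq> i" "k \<noteq> j" and l: "l \<noteq> i" "l \<noteq> j"
  shows "riemann G i j k l x = 0"
proof -
  have 2: "christoffel G i k m x * christoffel G m l j x - christoffel G i l m x * christoffel G m k j x = 0" for m
    using assms by (auto simp: chris aG_def)
  show ?thesis unfolding riemann_def using 2 chris_zero_fun assms by simp
qed

lemma riem_d:
  assumes x: "x \<in> U" and d: "i \<noteq> j" "i \<noteq> l" "j \<noteq> l"
  shows "riemann G i j i l x = 0"
proof -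
  have T: "christoffel G i i m x * christoffel G m l j x - christoffel G i l m x * christoffel G m i j x
     = (if m = l then aG G i l x * aG G l j x else 0) + (if m = j then aG G i j x * aG G j l x else 0)
       - (if m = i then aG G i l x * aG G i j x else 0)" for m
    using d by (auto simp: chris)
  have S: "(\<Sum>m\<in>UNIV. christoffel G i i m x * christoffel G m l j x - christoffel G i l m x * christoffel G m i j x)
     = aG G i l x * aG G l j x + aG G i j x * aG G j l x - aG G i l x * aG G i j x"
    unfolding T by (simp add: sum.distrib sum_subtractf)
  show ?thesis unfolding riemann_def S unfolding chris_zero_fun[OF d(2) d(1) d(3)[symmetric]] chris_fun_ik
    using tsarev[OF x d] by simp
qed

lemma riem_e:
  assumes x: "x \<in> U" and d: "i \<noteq> j" "i \<noteq> l" "j \<noteq> l"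
  shows "riemann G i j j l x = 0"
proof -
  have ji: "j \<noteq> i" using d by auto
  have T: "christoffel G i j m x * christoffel G m l j x - christoffel G i l m x * christoffel G m j j x
     = (if m = j then (- pd i (G j) x / (2 * G i x)) * aG G j l x else 0)
       + (if m = i then aG G i l x * (pd i (G j) x / (2 * G i x)) else 0)
       - (if m = l then (- pd i (G l) x / (2 * G i x)) * (- pd l (G j) x / (2 * G l x)) else 0)" for m
    using d by (auto simp: chris)
  have S: "(\<Sum>m\<in>UNIV. christoffel G i j m x * christoffel G m l j x - christoffel G i l m x * christoffel G m j j x)
     = (- pd i (G j) x / (2 * G i x)) * aG G j l x + aG G i l x * (pd i (G j) x / (2 * G i x))
       - (- pd i (G l) x / (2 * G i x)) * (- pd l (G j) x / (2 * G l x))"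
    unfolding T by (simp add: sum.distrib sum_subtractf)
  have dd: "(\<lambda>y. 2 * G i y) differentiable (at x)" "(\<lambda>y. - pd i (G j) y) differentiable (at x)"
    using dG[OF x] dpG[OF x] by auto
  have P: "pd l (christoffel G i j j) x =
      - ((pd l (pd i (G j)) x * (2 * G i x) - pd i (G j) x * (2 * pd l (G i) x)) / (2 * G i x)^2)"
    unfolding chris_fun_kk[OF ji] using dd dG[OF x] dpG[OF x] nzG[OF x] by simp
  have ts: "pd l (aG G j i) x = aG G j l x * aG G l i x + aG G j i x * aG G i l x - aG G j l x * aG G j i x"
    using tsarev[OF x] d by auto
  have gi: "G i x \<noteq> 0" "G j x \<noteq> 0" "G l x \<noteq> 0" using nzG[OF x] by auto
  define R where "R = aG G j l x * aG G l i x + aG G j i x * aG G i l x - aG G j l x * aG G j i x"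
  have "(pd l (pd i (G j)) x * (2 * G j x) - pd i (G j) x * (2 * pd l (G j) x)) / (2 * G j x)^2 = R"
    using ts unfolding pd_aG[OF x] R_def .
  hence "pd l (pd i (G j)) x * (2 * G j x) - pd i (G j) x * (2 * pd l (G j) x) = R * (2 * G j x)^2"
    using gi by (simp add: divide_eq_eq)
  hence Pv: "pd l (pd i (G j)) x = (R * (2 * G j x)^2 + pd i (G j) x * (2 * pd l (G j) x)) / (2 * G j x)"
    using gi by (simp add: eq_divide_eq algebra_simps)
  show ?thesis unfolding riemann_def S unfolding chris_zero_fun[OF d(2) d(1) d(3)[symmetric]] P Pv R_def
    using gi unfolding aG_def
    by (simp add: field_simps power2_eq_square)
qed

lemma van:
  assumes x: "x \<in> U" and nc: "\<not> (i \<noteq> j \<and> {i, j} = {k, l})"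
  shows "curv G i j k l x = 0"
proof -
  have "riemann G i j k l x = 0"
  proof (cases "k = l")
    case True thus ?thesis by (simp add: riem_kk)
  next
    case kl: False
    show ?thesis
    proof (cases "i = j")
      case True thus ?thesis using riem_ii[OF x kl] by simp
    next
      case ij: False
      have nset: "{i, j} \<noteq> {k, l}" using nc ij by auto
      show ?thesis
      proof (cases "k = i")
        case True
        hence "l \<noteq> j" "l \<noteq> i" using nset kl by auto
        thus ?thesis using True riem_d[OF x ij] by auto
      next
        case ki: False
        show ?thesis
        proof (cases "k = j")
          case True
          hence "l \<noteq> j" "l \<noteq> i" using nset kl by auto
          thus ?thesis using True riem_e[OF x ij] by auto
        next
          case kj: False
          show ?thesis
          proof (cases "l = i")
            case True
            hence "riemann G i j k l x = - riemann G i j i k x" using riemann_antisym by simp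
            thus ?thesis using riem_d[OF x ij] ki kj by auto
          next
            case li: False
            show ?thesis
            proof (cases "l = j")
              case True
              hence "riemann G i j k l x = - riemann G i j j k x" using riemann_antisym by simp
              thus ?thesis using riem_e[OF x ij] ki kj by auto
            next
              case False
              thus ?thesis using riem_disj[OF ij kl ki kj li] by simp
            qed
          qed
        qed
      qed
    qed
  qed
  thus ?thesis unfolding curv_def by simp
qed

end


lemma fin_alg:
  fixes vi vk gi gk dii dik dki dkk ddik ddki aii akk B A N M bi bk ni nk bbi bbk nni nnk
        w1i w1k w2i w2k Ta Tb Za Zb PP igi igk iali ialk iDe ivik
        aik aki pik pki pii pkk pdaik pdaki pdpik pdpki lapBi lapBk lapNi lapNk PS Q RR hvi hvk rhoi rhok De :: real
  assumes inv: "igi * gi = 1" "igk * gk = 1" "iali * (M - N * vi) = 1" "ialk * (M - N * vk) = 1"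
     "iDe * (B * M - A * N) = 1" "ivik * (vi - vk) = 1"
  and dDe: "De = B * M - A * N"
  and daik: "aik = - dki * ivik" and daki: "aki = dik * ivik"
  and dpik: "pik = (vk * nk - nk * vi - N * dki)*iali - (bk * M + B * vk * nk - vk * bk * N - A * nk)*iDe"
  and dpki: "pki = (vi * ni - ni * vk - N * dik)*ialk - (bi * M + B * vi * ni - vi * bi * N - A * ni)*iDe"
  and dpii: "pii = (- N * dii)*iali - (bi * M + B * vi * ni - vi * bi * N - A * ni)*iDe"
  and dpkk: "pkk = (- N * dkk)*ialk - (bk * M + B * vk * nk - vk * bk * N - A * nk)*iDe"
  and dpdaik: "pdaik = (ddik*(vi-vk) - dik*(dii - dik))*ivik^2"
  and dpdaki: "pdaki = (ddki*(vk-vi) - dki*(dkk - dki))*ivik^2"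
  and dpdpik: "pdpik = (dii * ni + vi * nni - nni * vk - 2 * ni * dik - N * ddik)*ialk - (vi * ni - ni * vk - N * dik)^2 * ialk^2
        - ((bbi * M + 2 * bi*(vi * ni) + B*(dii * ni + vi * nni) - (dii * bi + vi * bbi)*N - 2*(vi * bi)*ni - A * nni)*iDe
           - (bi * M + B * vi * ni - vi * bi * N - A * ni)^2 * iDe^2)"
  and dpdpki: "pdpki = (dkk * nk + vk * nnk - nnk * vi - 2 * nk * dki - N * ddki)*iali - (vk * nk - nk * vi - N * dki)^2 * iali^2
        - ((bbk * M + 2 * bk*(vk * nk) + B*(dkk * nk + vk * nnk) - (dkk * bk + vk * bbk)*N - 2*(vk * bk)*nk - A * nnk)*iDe
           - (bk * M + B * vk * nk - vk * bk * N - A * nk)^2 * iDe^2)"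
  and dlapBi: "lapBi = igi*(bbi - aii * bi + aik * gi * igk * bk)"
  and dlapBk: "lapBk = igk*(bbk - akk * bk + aki * gk * igi * bi)"
  and dlapNi: "lapNi = igi*(nni - aii * ni + aik * gi * igk * nk)"
  and dlapNk: "lapNk = igk*(nnk - akk * nk + aki * gk * igi * ni)"
  and dPS: "PS = bi * ni * igi + bk * nk * igk + Ta * N + Tb * M + Za * B + Zb * A"
  and dQ: "Q = (bi^2 * igi + bk^2 * igk)/2 + B * Ta + A * Tb"
  and dRR: "RR = (ni^2 * igi + nk^2 * igk)/2 + N * Za + M * Zb"
  and dhvi: "hvi = (B * vi - A)*iali" and dhvk: "hvk = (B * vk - A)*ialk"
  and drhoi: "rhoi = De * iali" and drhok: "rhok = De * ialk"
  shows "- (rhoi^2 * igi)*(pdaik + pdpik + (aki+pki)^2 - (aki+pki)*(aii+pii))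
         - (rhok^2 * igk)*(pdaki + pdpki + (aik+pik)^2 - (aik+pik)*(akk+pkk))
         - rhoi * rhok*(- igi*(pdaik + aki^2 - aki * aii) - igk*(pdaki + aik^2 - aik * akk))
     = (rhoi*(lapNi + w1i * N + Za + w2i * M + vi * Zb) - PP - hvi * RR)*hvk
       + (rhok*(lapNk + w1k * N + Za + w2k * M + vk * Zb) - PP - hvk * RR)*hvi
       + (rhoi*(lapBi + w1i * B + Ta + w2i * A + vi * Tb) - Q - hvi*(PS - PP))
       + (rhok*(lapBk + w1k * B + Ta + w2k * A + vk * Tb) - Q - hvk*(PS - PP))
       - rhoi * rhok*(w1i+w1k+w2i * vk+w2k * vi)" (is "?L = ?R")
proof -
  have nz: "gi \<noteq> 0" "gk \<noteq> 0" "M - N * vi \<noteq> 0" "M - N * vk \<noteq> 0" "B * M - A * N \<noteq> 0" "vi - vk \<noteq> 0"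
    using inv by (metis mult_zero_right zero_neq_one)+
  have sub: "igi = 1/gi" "igk = 1/gk" "iali = 1/(M - N * vi)" "ialk = 1/(M - N * vk)" "iDe = 1/(B * M - A * N)" "ivik = 1/(vi - vk)"
    using inv nz by (simp_all add: eq_divide_eq)
  have g0: "2 * B - B * M * iali - B * M * ialk + B * N * iali * vi + B * N * ialk * vk = 0" using inv by algebra
  have g1: "2 * A - A * M * iali - A * M * ialk + A * N * iali * vi + A * N * ialk * vk = 0" using inv by algebra
  have g2: "2 * A * B * M * iali * ialk - A * B * N * iali * ialk * vi - A * B * N * iali * ialk * vk - A * B * iali - A * B * ialk - B^2 * M * iali * ialk * vi - B^2 * M * iali * ialk * vk + 2 * B^2 * N * iali * ialk * vi * vk + B^2 * iali * vi + B^2 * ialk * vk = 0" using inv by algebra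
  have g3: "- A * B * M * iali * ialk * vi - A * B * M * iali * ialk * vk + 2 * A * B * N * iali * ialk * vi * vk + A * B * iali * vi + A * B * ialk * vk + 2 * A^2 * M * iali * ialk - A^2 * N * iali * ialk * vi - A^2 * N * iali * ialk * vk - A^2 * iali - A^2 * ialk = 0" using inv by algebra
  have g4: "- 2 * A * B * M * N^2 * iDe * iali^2 * igi * vi + 2 * A * B * M^2 * N * iDe * iali^2 * igi - A * N * iali * igi - A^2 * M * N^2 * iDe * iali^2 * igi + A^2 * N^3 * iDe * iali^2 * igi * vi + B * M * iali * igi + B^2 * M^2 * N * iDe * iali^2 * igi * vi - B^2 * M^3 * iDe * iali^2 * igi = 0" using inv by algebra
  have g5: "2 * A * B * M * N * iali * ialk * igi * ivik - 2 * A * B * M * N * iali^2 * igi * ivik + 2 * A * B * M * N^2 * iali^2 * ialk * igi - A^2 * N^2 * iali * ialk * igi * ivik + A^2 * N^2 * iali^2 * igi * ivik - A^2 * N^3 * iali^2 * ialk * igi - B^2 * M^2 * N * iali^2 * ialk * igi - B^2 * M^2 * iali * ialk * igi * ivik + B^2 * M^2 * iali^2 * igi * ivik = 0" using inv by algebra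
  have g6: "- 2 * A * B * M * N * iali^2 * ialk * igi * vi + 2 * A * B * M * N * iali^2 * ialk * igi * vk - A * B * M * iali * ialk * igi - A * B * N * iali * ialk * igi * vk + 2 * A * B^2 * M * N * iDe * iali^2 * igi * vi + A * B^2 * M^2 * iDe * iali^2 * igi - 2 * A^2 * B * M * N * iDe * iali^2 * igi - A^2 * B * N^2 * iDe * iali^2 * igi * vi + A^2 * N * iali * ialk * igi + A^2 * N^2 * iali^2 * ialk * igi * vi - A^2 * N^2 * iali^2 * ialk * igi * vk + A^3 * N^2 * iDe * iali^2 * igi + B^2 * M * iali * ialk * igi * vk + B^2 * M^2 * iali^2 * ialk * igi * vi - B^2 * M^2 * iali^2 * ialk * igi * vk - B^3 * M^2 * iDe * iali^2 * igi * vi = 0" using inv by algebra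
  have g7: "- 2 * A * B * M * N^2 * iDe * ialk^2 * igk * vk + 2 * A * B * M^2 * N * iDe * ialk^2 * igk - A * N * ialk * igk - A^2 * M * N^2 * iDe * ialk^2 * igk + A^2 * N^3 * iDe * ialk^2 * igk * vk + B * M * ialk * igk + B^2 * M^2 * N * iDe * ialk^2 * igk * vk - B^2 * M^3 * iDe * ialk^2 * igk = 0" using inv by algebra
  have g8: "- 2 * A * B * M * N * iali * ialk * igk * ivik + 2 * A * B * M * N * ialk^2 * igk * ivik + 2 * A * B * M * N^2 * iali * ialk^2 * igk + A^2 * N^2 * iali * ialk * igk * ivik - A^2 * N^2 * ialk^2 * igk * ivik - A^2 * N^3 * iali * ialk^2 * igk - B^2 * M^2 * N * iali * ialk^2 * igk + B^2 * M^2 * iali * ialk * igk * ivik - B^2 * M^2 * ialk^2 * igk * ivik = 0" using inv by algebra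
  have g9: "2 * A * B * M * N * iali * ialk^2 * igk * vi - 2 * A * B * M * N * iali * ialk^2 * igk * vk - A * B * M * iali * ialk * igk - A * B * N * iali * ialk * igk * vi + 2 * A * B^2 * M * N * iDe * ialk^2 * igk * vk + A * B^2 * M^2 * iDe * ialk^2 * igk - 2 * A^2 * B * M * N * iDe * ialk^2 * igk - A^2 * B * N^2 * iDe * ialk^2 * igk * vk + A^2 * N * iali * ialk * igk - A^2 * N^2 * iali * ialk^2 * igk * vi + A^2 * N^2 * iali * ialk^2 * igk * vk + A^3 * N^2 * iDe * ialk^2 * igk + B^2 * M * iali * ialk * igk * vi - B^2 * M^2 * iali * ialk^2 * igk * vi + B^2 * M^2 * iali * ialk^2 * igk * vk - B^3 * M^2 * iDe * ialk^2 * igk * vk = 0" using inv by algebra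
  have g10: "2 * A * B * M * N^2 * iDe * iali^2 * igi * vi - 2 * A * B * M^2 * N * iDe * iali^2 * igi + A * N * iali * igi + A^2 * M * N^2 * iDe * iali^2 * igi - A^2 * N^3 * iDe * iali^2 * igi * vi - B * M * iali * igi - B^2 * M^2 * N * iDe * iali^2 * igi * vi + B^2 * M^3 * iDe * iali^2 * igi = 0" using inv by algebra
  have g11: "2 * A * B * M * N^2 * iDe * ialk^2 * igk * vk - 2 * A * B * M^2 * N * iDe * ialk^2 * igk + A * N * ialk * igk + A^2 * M * N^2 * iDe * ialk^2 * igk - A^2 * N^3 * iDe * ialk^2 * igk * vk - B * M * ialk * igk - B^2 * M^2 * N * iDe * ialk^2 * igk * vk + B^2 * M^3 * iDe * ialk^2 * igk = 0" using inv by algebra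
  have g12: "2 * A * B * M * N^2 * iDe * iali^2 * igi + 2 * A * B * M * N^3 * iDe * iali^3 * igi * vi - 2 * A * B * M^2 * N^2 * iDe * iali^3 * igi + A^2 * M * N^3 * iDe * iali^3 * igi - A^2 * N^3 * iDe * iali^2 * igi - A^2 * N^4 * iDe * iali^3 * igi * vi - B^2 * M^2 * N * iDe * iali^2 * igi - B^2 * M^2 * N^2 * iDe * iali^3 * igi * vi + B^2 * M^3 * N * iDe * iali^3 * igi = 0" using inv by algebra
  have g13: "2 * A * B * M * N^2 * iDe * iali^2 * igi * ivik * vi - 2 * A * B * M * N^3 * iDe * iali^2 * ialk * igi * vi - 2 * A * B * M^2 * N * iDe * iali^2 * igi * ivik + 2 * A * B * M^2 * N^2 * iDe * iali^2 * ialk * igi + A * N * gk * ialk * igi * igk * ivik + A^2 * M * N^2 * iDe * iali^2 * igi * ivik - A^2 * M * N^3 * iDe * iali^2 * ialk * igi - A^2 * N^3 * iDe * iali^2 * igi * ivik * vi + A^2 * N^4 * iDe * iali^2 * ialk * igi * vi - B * M * gk * ialk * igi * igk * ivik - B^2 * M^2 * N * iDe * iali^2 * igi * ivik * vi + B^2 * M^2 * N^2 * iDe * iali^2 * ialk * igi * vi - B^2 * M^3 * N * iDe * iali^2 * ialk * igi + B^2 * M^3 * iDe * iali^2 * igi * ivik = 0" using inv by algebra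
  have g14: "- 2 * A * B * M * N^2 * iDe * iali^2 * ialk * igi * vi * vk + 2 * A * B * M * N^2 * iDe * iali^2 * ialk * igi * vi^2 - 2 * A * B * M^2 * N * iDe * iali^2 * ialk * igi * vi + 2 * A * B * M^2 * N * iDe * iali^2 * ialk * igi * vk - 4 * A * B^2 * M * N^2 * iDe^2 * iali^2 * igi * vi^2 + 2 * A * B^2 * M^2 * N * iDe^2 * iali^2 * igi * vi + 2 * A * B^2 * M^3 * iDe^2 * iali^2 * igi - A * iali * igi - A * ialk * igi + 2 * A^2 * B * M * N^2 * iDe^2 * iali^2 * igi * vi - 4 * A^2 * B * M^2 * N * iDe^2 * iali^2 * igi + 2 * A^2 * B * N^3 * iDe^2 * iali^2 * igi * vi^2 + A^2 * M * N^2 * iDe * iali^2 * ialk * igi * vi - A^2 * M * N^2 * iDe * iali^2 * ialk * igi * vk + A^2 * N^3 * iDe * iali^2 * ialk * igi * vi * vk - A^2 * N^3 * iDe * iali^2 * ialk * igi * vi^2 + 2 * A^3 * M * N^2 * iDe^2 * iali^2 * igi - 2 * A^3 * N^3 * iDe^2 * iali^2 * igi * vi + B * iali * igi * vi + B * ialk * igi * vk + B^2 * M^2 * N * iDe * iali^2 * ialk * igi * vi * vk - B^2 * M^2 * N * iDe * iali^2 * ialk * igi * vi^2 + B^2 * M^3 * iDe * iali^2 * ialk * igi * vi - B^2 * M^3 * iDe * iali^2 * ialk * igi * vk + 2 * B^3 * M^2 * N * iDe^2 * iali^2 * igi * vi^2 - 2 * B^3 * M^3 * iDe^2 * iali^2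 * igi * vi = 0" using inv by algebra
  have g15: "2 * A * B * M * N^3 * iDe^2 * iali^2 * igi * vi^2 - 4 * A * B * M^2 * N^2 * iDe^2 * iali^2 * igi * vi + 2 * A * B * M^3 * N * iDe^2 * iali^2 * igi + 2 * A^2 * M * N^3 * iDe^2 * iali^2 * igi * vi - A^2 * M^2 * N^2 * iDe^2 * iali^2 * igi - A^2 * N^4 * iDe^2 * iali^2 * igi * vi^2 - B^2 * M^2 * N^2 * iDe^2 * iali^2 * igi * vi^2 + 2 * B^2 * M^3 * N * iDe^2 * iali^2 * igi * vi - B^2 * M^4 * iDe^2 * iali^2 * igi + igi = 0" using inv by algebra
  have g16: "- 2 * A * B * M * N^2 * iDe * ialk^2 * igk * ivik * vk - 2 * A * B * M * N^3 * iDe * iali * ialk^2 * igk * vk + 2 * A * B * M^2 * N * iDe * ialk^2 * igk * ivik + 2 * A * B * M^2 * N^2 * iDe * iali * ialk^2 * igk - A * N * gi * iali * igi * igk * ivik - A^2 * M * N^2 * iDe * ialk^2 * igk * ivik - A^2 * M * N^3 * iDe * iali * ialk^2 * igk + A^2 * N^3 * iDe * ialk^2 * igk * ivik * vk + A^2 * N^4 * iDe * iali * ialk^2 * igk * vk + B * M * gi * iali * igi * igk * ivik + B^2 * M^2 * N * iDe * ialk^2 * igk * ivik * vk + B^2 * M^2 * N^2 * iDe * iali * ialk^2 * igk * vk - B^2 * M^3 * N * iDe * iali * ialk^2 * igk - B^2 * M^3 * iDe * ialk^2 * igk * ivik = 0" using inv by algebra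
  have g17: "2 * A * B * M * N^2 * iDe * ialk^2 * igk + 2 * A * B * M * N^3 * iDe * ialk^3 * igk * vk - 2 * A * B * M^2 * N^2 * iDe * ialk^3 * igk + A^2 * M * N^3 * iDe * ialk^3 * igk - A^2 * N^3 * iDe * ialk^2 * igk - A^2 * N^4 * iDe * ialk^3 * igk * vk - B^2 * M^2 * N * iDe * ialk^2 * igk - B^2 * M^2 * N^2 * iDe * ialk^3 * igk * vk + B^2 * M^3 * N * iDe * ialk^3 * igk = 0" using inv by algebra
  have g18: "- 2 * A * B * M * N^2 * iDe * iali * ialk^2 * igk * vi * vk + 2 * A * B * M * N^2 * iDe * iali * ialk^2 * igk * vk^2 + 2 * A * B * M^2 * N * iDe * iali * ialk^2 * igk * vi - 2 * A * B * M^2 * N * iDe * iali * ialk^2 * igk * vk - 4 * A * B^2 * M * N^2 * iDe^2 * ialk^2 * igk * vk^2 + 2 * A * B^2 * M^2 * N * iDe^2 * ialk^2 * igk * vk + 2 * A * B^2 * M^3 * iDe^2 * ialk^2 * igk - A * iali * igk - A * ialk * igk + 2 * A^2 * B * M * N^2 * iDe^2 * ialk^2 * igk * vk - 4 * A^2 * B * M^2 * N * iDe^2 * ialk^2 * igk + 2 * A^2 * B * N^3 * iDe^2 * ialk^2 * igk * vk^2 - A^2 * M * N^2 * iDe * iali * ialk^2 * igk * vi + A^2 * M * N^2 * iDe * iali * ialk^2 * igk * vk + A^2 * N^3 * iDe * iali * ialk^2 * igk * vi * vk - A^2 * N^3 * iDe * iali * ialk^2 * igk * vk^2 + 2 * A^3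 * M * N^2 * iDe^2 * ialk^2 * igk - 2 * A^3 * N^3 * iDe^2 * ialk^2 * igk * vk + B * iali * igk * vi + B * ialk * igk * vk + B^2 * M^2 * N * iDe * iali * ialk^2 * igk * vi * vk - B^2 * M^2 * N * iDe * iali * ialk^2 * igk * vk^2 - B^2 * M^3 * iDe * iali * ialk^2 * igk * vi + B^2 * M^3 * iDe * iali * ialk^2 * igk * vk + 2 * B^3 * M^2 * N * iDe^2 * ialk^2 * igk * vk^2 - 2 * B^3 * M^3 * iDe^2 * ialk^2 * igk * vk = 0" using inv by algebra
  have g19: "2 * A * B * M * N^3 * iDe^2 * ialk^2 * igk * vk^2 - 4 * A * B * M^2 * N^2 * iDe^2 * ialk^2 * igk * vk + 2 * A * B * M^3 * N * iDe^2 * ialk^2 * igk + 2 * A^2 * M * N^3 * iDe^2 * ialk^2 * igk * vk - A^2 * M^2 * N^2 * iDe^2 * ialk^2 * igk - A^2 * N^4 * iDe^2 * ialk^2 * igk * vk^2 - B^2 * M^2 * N^2 * iDe^2 * ialk^2 * igk * vk^2 + 2 * B^2 * M^3 * N * iDe^2 * ialk^2 * igk * vk - B^2 * M^4 * iDe^2 * ialk^2 * igk + igk = 0" using inv by algebra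
  have g20: "- 2 * A * B * M * N * iali * ialk * igi * ivik^2 * vi + 2 * A * B * M * N * iali * ialk * igi * ivik^2 * vk + 2 * A * B * M * N * iali^2 * igi * ivik^2 * vi - 2 * A * B * M * N * iali^2 * igi * ivik^2 * vk - 2 * A * B * M * N^2 * iali^2 * ialk * igi + A^2 * N^2 * iali * ialk * igi * ivik^2 * vi - A^2 * N^2 * iali * ialk * igi * ivik^2 * vk - A^2 * N^2 * iali^2 * igi * ivik^2 * vi + A^2 * N^2 * iali^2 * igi * ivik^2 * vk + A^2 * N^3 * iali^2 * ialk * igi + B^2 * M^2 * N * iali^2 * ialk * igi + B^2 * M^2 * iali * ialk * igi * ivik^2 * vi - B^2 * M^2 * iali * ialk * igi * ivik^2 * vk - B^2 * M^2 * iali^2 * igi * ivik^2 * vi + B^2 * M^2 * iali^2 * igi * ivik^2 * vk = 0" using inv by algebra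
  have g21: "2 * A * B * M * N * iali * ialk * igk * ivik^2 * vi - 2 * A * B * M * N * iali * ialk * igk * ivik^2 * vk - 2 * A * B * M * N * ialk^2 * igk * ivik^2 * vi + 2 * A * B * M * N * ialk^2 * igk * ivik^2 * vk - 2 * A * B * M * N^2 * iali * ialk^2 * igk - A^2 * N^2 * iali * ialk * igk * ivik^2 * vi + A^2 * N^2 * iali * ialk * igk * ivik^2 * vk + A^2 * N^2 * ialk^2 * igk * ivik^2 * vi - A^2 * N^2 * ialk^2 * igk * ivik^2 * vk + A^2 * N^3 * iali * ialk^2 * igk + B^2 * M^2 * N * iali * ialk^2 * igk - B^2 * M^2 * iali * ialk * igk * ivik^2 * vi + B^2 * M^2 * iali * ialk * igk * ivik^2 * vk + B^2 * M^2 * ialk^2 * igk * ivik^2 * vi - B^2 * M^2 * ialk^2 * igk * ivik^2 * vk = 0" using inv by algebra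
  have g22: "2 * A * B * M * N * iali * ialk * igi * ivik^2 - 2 * A * B * M * N * iali^2 * igi * ivik^2 + 2 * A * B * M * N^2 * iali^3 * igi * ivik - 2 * A * B * M * N^3 * iali^3 * ialk * igi - A^2 * N^2 * iali * ialk * igi * ivik^2 + A^2 * N^2 * iali^2 * igi * ivik^2 - A^2 * N^3 * iali^3 * igi * ivik + A^2 * N^4 * iali^3 * ialk * igi - B^2 * M^2 * N * iali^3 * igi * ivik + B^2 * M^2 * N^2 * iali^3 * ialk * igi - B^2 * M^2 * iali * ialk * igi * ivik^2 + B^2 * M^2 * iali^2 * igi * ivik^2 = 0" using inv by algebra
  have g23: "2 * A * B * M * N * iali^2 * ialk * igi + 2 * A * B * M * N^2 * iali^3 * ialk * igi * vi - 2 * A * B * M * N^2 * iali^3 * ialk * igi * vk - 2 * A * B^2 * M * N * iDe * iali^2 * igi - 2 * A * B^2 * M * N^2 * iDe * iali^3 * igi * vi - A * B^2 * M^2 * N * iDe * iali^3 * igi + 2 * A^2 * B * M * N^2 * iDe * iali^3 * igi + A^2 * B * N^2 * iDe * iali^2 * igi + A^2 * B * N^3 * iDe * iali^3 * igi * vi - A^2 * N^2 * iali^2 * ialk * igi - A^2 * N^3 * iali^3 * ialk * igi * vi + A^2 * N^3 * iali^3 * ialk * igi * vk - A^3 * N^3 * iDe * iali^3 * igi - B^2 * M^2 * N * iali^3 * ialk * igi * vi + B^2 * M^2 * N * iali^3 * ialk * igi * vk - B^2 * M^2 * iali^2 * ialk * igi + B^3 * M^2 * N * iDe * iali^3 * igi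 * vi + B^3 * M^2 * iDe * iali^2 * igi = 0" using inv by algebra
  have g24: "- 4 * A * B * M * N * iali^2 * ialk * igi + 4 * A * B * M * N * iali^2 * ialk * igi * ivik * vi - 4 * A * B * M * N * iali^2 * ialk * igi * ivik * vk + A * B * M * gk * iali * ialk * igi * igk * ivik + A * B * N * gk * iali * ialk * igi * igk * ivik * vi - 2 * A * B^2 * M * N * iDe * iali^2 * igi * ivik * vi + 2 * A * B^2 * M * N^2 * iDe * iali^2 * ialk * igi * vi + A * B^2 * M^2 * N * iDe * iali^2 * ialk * igi - A * B^2 * M^2 * iDe * iali^2 * igi * ivik + 2 * A^2 * B * M * N * iDe * iali^2 * igi * ivik - 2 * A^2 * B * M * N^2 * iDe * iali^2 * ialk * igi + A^2 * B * N^2 * iDe * iali^2 * igi * ivik * vi - A^2 * B * N^3 * iDe * iali^2 * ialk * igi * vi - A^2 * N * gk * iali * ialk * igi * igk * ivik + 2 * A^2 * N^2 * iali^2 * ialk * igi - 2 * A^2 * N^2 * iali^2 * ialk * igi * ivik * vi + 2 * A^2 * N^2 * iali^2 * ialk * igi * ivik * vk - A^3 * N^2 * iDe * iali^2 * igi * ivik + A^3 * N^3 * iDe * iali^2 * ialk * igi - B^2 * M * gk * iali * ialk * igi * igk * ivik * vi + 2 * B^2 * M^2 * iali^2 * ialk * igi - 2 * B^2 * M^2 * iali^2 * ialk * igi * ivik * vi + 2 * B^2 * M^2 * iali^2 * ialk * igi * ivik * vk - B^3 * M^2 * N * iDe * iali^2 * ialk * igi * vi + B^3 * M^2 * iDe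 * iali^2 * igi * ivik * vi = 0" using inv by algebra
  have g25: "- 4 * A * B * M * N * iali * ialk * igi * ivik^2 + 4 * A * B * M * N * iali^2 * igi * ivik^2 - 4 * A * B * M * N^2 * iali^2 * ialk * igi * ivik + 2 * A^2 * N^2 * iali * ialk * igi * ivik^2 - 2 * A^2 * N^2 * iali^2 * igi * ivik^2 + 2 * A^2 * N^3 * iali^2 * ialk * igi * ivik + 2 * B^2 * M^2 * N * iali^2 * ialk * igi * ivik + 2 * B^2 * M^2 * iali * ialk * igi * ivik^2 - 2 * B^2 * M^2 * iali^2 * igi * ivik^2 = 0" using inv by algebra
  have g26: "2 * A * B * M * N * iali * ialk * igk * ivik^2 - 2 * A * B * M * N * ialk^2 * igk * ivik^2 - 2 * A * B * M * N^2 * ialk^3 * igk * ivik - 2 * A * B * M * N^3 * iali * ialk^3 * igk - A^2 * N^2 * iali * ialk * igk * ivik^2 + A^2 * N^2 * ialk^2 * igk * ivik^2 + A^2 * N^3 * ialk^3 * igk * ivik + A^2 * N^4 * iali * ialk^3 * igk + B^2 * M^2 * N * ialk^3 * igk * ivik + B^2 * M^2 * N^2 * iali * ialk^3 * igk - B^2 * M^2 * iali * ialk * igk * ivik^2 + B^2 * M^2 * ialk^2 * igk * ivik^2 = 0" using inv by algebra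
  have g27: "- 4 * A * B * M * N * iali * ialk^2 * igk + 4 * A * B * M * N * iali * ialk^2 * igk * ivik * vi - 4 * A * B * M * N * iali * ialk^2 * igk * ivik * vk - A * B * M * gi * iali * ialk * igi * igk * ivik - A * B * N * gi * iali * ialk * igi * igk * ivik * vk + 2 * A * B^2 * M * N * iDe * ialk^2 * igk * ivik * vk + 2 * A * B^2 * M * N^2 * iDe * iali * ialk^2 * igk * vk + A * B^2 * M^2 * N * iDe * iali * ialk^2 * igk + A * B^2 * M^2 * iDe * ialk^2 * igk * ivik - 2 * A^2 * B * M * N * iDe * ialk^2 * igk * ivik - 2 * A^2 * B * M * N^2 * iDe * iali * ialk^2 * igk - A^2 * B * N^2 * iDe * ialk^2 * igk * ivik * vk - A^2 * B * N^3 * iDe * iali * ialk^2 * igk * vk + A^2 * N * gi * iali * ialk * igi * igk * ivik + 2 * A^2 * N^2 * iali * ialk^2 * igk - 2 * A^2 * N^2 * iali * ialk^2 * igk * ivik * vi + 2 * A^2 * N^2 * iali * ialk^2 * igk * ivik * vk + A^3 * N^2 * iDe * ialk^2 * igk * ivik + A^3 * N^3 * iDe * iali * ialk^2 * igk + B^2 * M * gi * iali * ialk * igi * igk * ivik * vk + 2 * B^2 * M^2 * iali * ialk^2 * igk - 2 * B^2 * M^2 * iali * ialk^2 * igk * ivik * vi + 2 * B^2 * M^2 * iali * ialk^2 * igk * ivik * vk - B^3 * M^2 * N * iDe * iali * ialk^2 * igk * vk - B^3 * M^2 * iDe * ialk^2 * igk * ivik * vk = 0" using inv by algebra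
  have g28: "- 4 * A * B * M * N * iali * ialk * igk * ivik^2 + 4 * A * B * M * N * ialk^2 * igk * ivik^2 + 4 * A * B * M * N^2 * iali * ialk^2 * igk * ivik + 2 * A^2 * N^2 * iali * ialk * igk * ivik^2 - 2 * A^2 * N^2 * ialk^2 * igk * ivik^2 - 2 * A^2 * N^3 * iali * ialk^2 * igk * ivik - 2 * B^2 * M^2 * N * iali * ialk^2 * igk * ivik + 2 * B^2 * M^2 * iali * ialk * igk * ivik^2 - 2 * B^2 * M^2 * ialk^2 * igk * ivik^2 = 0" using inv by algebra
  have g29: "2 * A * B * M * N * iali * ialk^2 * igk - 2 * A * B * M * N^2 * iali * ialk^3 * igk * vi + 2 * A * B * M * N^2 * iali * ialk^3 * igk * vk - 2 * A * B^2 * M * N * iDe * ialk^2 * igk - 2 * A * B^2 * M * N^2 * iDe * ialk^3 * igk * vk - A * B^2 * M^2 * N * iDe * ialk^3 * igk + 2 * A^2 * B * M * N^2 * iDe * ialk^3 * igk + A^2 * B * N^2 * iDe * ialk^2 * igk + A^2 * B * N^3 * iDe * ialk^3 * igk * vk - A^2 * N^2 * iali * ialk^2 * igk + A^2 * N^3 * iali * ialk^3 * igk * vi - A^2 * N^3 * iali * ialk^3 * igk * vk - A^3 * N^3 * iDe * ialk^3 * igk + B^2 * M^2 * N * iali * ialk^3 * igk * vi - B^2 * M^2 * N * iali * ialk^3 * igk * vk - B^2 * M^2 * iali * ialk^2 * igk + B^3 * M^2 * N * iDe * ialk^3 * igk * vk + B^3 * M^2 * iDe * ialk^2 * igk = 0"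 using inv by algebra
  have g30: "- A * B * iali * ialk * igi * vi - A * B * iali * ialk * igi * vk + 2 * A * B^2 * M * N * iDe * iali^2 * ialk * igi * vi * vk - 2 * A * B^2 * M * N * iDe * iali^2 * ialk * igi * vi^2 - A * B^2 * M^2 * iDe * iali^2 * ialk * igi * vi + A * B^2 * M^2 * iDe * iali^2 * ialk * igi * vk + 2 * A * B^3 * M * N * iDe^2 * iali^2 * igi * vi^2 + 2 * A * B^3 * M^2 * iDe^2 * iali^2 * igi * vi + 2 * A^2 * B * M * N * iDe * iali^2 * ialk * igi * vi - 2 * A^2 * B * M * N * iDe * iali^2 * ialk * igi * vk - A^2 * B * N^2 * iDe * iali^2 * ialk * igi * vi * vk + A^2 * B * N^2 * iDe * iali^2 * ialk * igi * vi^2 - 4 * A^2 * B^2 * M * N * iDe^2 * iali^2 * igi * vi - A^2 * B^2 * M^2 * iDe^2 * iali^2 * igi - A^2 * B^2 * N^2 * iDe^2 * iali^2 * igi * vi^2 + A^2 * iali * ialk * igi + 2 * A^3 * B * M * N * iDe^2 * iali^2 * igi + 2 * A^3 * B * N^2 * iDe^2 * iali^2 * igi * vi - A^3 * N^2 * iDe * iali^2 * ialk * igi * vi + A^3 * N^2 * iDe * iali^2 * ialk * igi * vk - A^4 * N^2 * iDe^2 * iali^2 * igi + B^2 * iali * ialk * igi * vi * vk - B^3 * M^2 * iDe * iali^2 * ialk * igi * vi * vk + B^3 * M^2 * iDe * iali^2 * ialk * igi * vi^2 - B^4 * M^2 * iDe^2 * iali^2 * igi * vi^2 = 0" using inv by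 algebra
  have g31: "- A * B * iali * ialk * igk * vi - A * B * iali * ialk * igk * vk + 2 * A * B^2 * M * N * iDe * iali * ialk^2 * igk * vi * vk - 2 * A * B^2 * M * N * iDe * iali * ialk^2 * igk * vk^2 + A * B^2 * M^2 * iDe * iali * ialk^2 * igk * vi - A * B^2 * M^2 * iDe * iali * ialk^2 * igk * vk + 2 * A * B^3 * M * N * iDe^2 * ialk^2 * igk * vk^2 + 2 * A * B^3 * M^2 * iDe^2 * ialk^2 * igk * vk - 2 * A^2 * B * M * N * iDe * iali * ialk^2 * igk * vi + 2 * A^2 * B * M * N * iDe * iali * ialk^2 * igk * vk - A^2 * B * N^2 * iDe * iali * ialk^2 * igk * vi * vk + A^2 * B * N^2 * iDe * iali * ialk^2 * igk * vk^2 - 4 * A^2 * B^2 * M * N * iDe^2 * ialk^2 * igk * vk - A^2 * B^2 * M^2 * iDe^2 * ialk^2 * igk - A^2 * B^2 * N^2 * iDe^2 * ialk^2 * igk * vk^2 + A^2 * iali * ialk * igk + 2 * A^3 * B * M * N * iDe^2 * ialk^2 * igk + 2 * A^3 * B * N^2 * iDe^2 * ialk^2 * igk * vk + A^3 * N^2 * iDe * iali * ialk^2 * igk * vi - A^3 * N^2 * iDe * iali * ialk^2 * igk * vk - A^4 * N^2 * iDe^2 * ialk^2 * igk + B^2 * iali * ialk * igk * vi * vk - B^3 * M^2 * iDe * iali * ialk^2 * igk * vi * vk + B^3 * M^2 * iDe * iali * ialk^2 * igk * vk^2 - B^4 * M^2 * iDe^2 * ialk^2 * igk * vk^2 = 0"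 using inv by algebra
  have g32: "2 * A * B * M * N * iali^2 * ialk * igi * vi - 2 * A * B * M * N * iali^2 * ialk * igi * vk + A * B * M * iali * ialk * igi + A * B * N * iali * ialk * igi * vk - 2 * A * B^2 * M * N * iDe * iali^2 * igi * vi - A * B^2 * M^2 * iDe * iali^2 * igi + 2 * A^2 * B * M * N * iDe * iali^2 * igi + A^2 * B * N^2 * iDe * iali^2 * igi * vi - A^2 * N * iali * ialk * igi - A^2 * N^2 * iali^2 * ialk * igi * vi + A^2 * N^2 * iali^2 * ialk * igi * vk - A^3 * N^2 * iDe * iali^2 * igi - B^2 * M * iali * ialk * igi * vk - B^2 * M^2 * iali^2 * ialk * igi * vi + B^2 * M^2 * iali^2 * ialk * igi * vk + B^3 * M^2 * iDe * iali^2 * igi * vi = 0" using inv by algebra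
  have g33: "- 2 * A * B * M * N * iali * ialk^2 * igk * vi + 2 * A * B * M * N * iali * ialk^2 * igk * vk + A * B * M * iali * ialk * igk + A * B * N * iali * ialk * igk * vi - 2 * A * B^2 * M * N * iDe * ialk^2 * igk * vk - A * B^2 * M^2 * iDe * ialk^2 * igk + 2 * A^2 * B * M * N * iDe * ialk^2 * igk + A^2 * B * N^2 * iDe * ialk^2 * igk * vk - A^2 * N * iali * ialk * igk + A^2 * N^2 * iali * ialk^2 * igk * vi - A^2 * N^2 * iali * ialk^2 * igk * vk - A^3 * N^2 * iDe * ialk^2 * igk - B^2 * M * iali * ialk * igk * vi + B^2 * M^2 * iali * ialk^2 * igk * vi - B^2 * M^2 * iali * ialk^2 * igk * vk + B^3 * M^2 * iDe * ialk^2 * igk * vk = 0" using inv by algebra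
  have g34: "- A * B * M * N * iali * ialk + A * B * N * iali + A * B * N^2 * iali * ialk * vk - B^2 * M * N * iali * ialk * vk - B^2 * M * iali + B^2 * M^2 * iali * ialk = 0" using inv by algebra
  have g35: "- A * B * M * N * iali * ialk + A * B * N * ialk + A * B * N^2 * iali * ialk * vi - B^2 * M * N * iali * ialk * vi - B^2 * M * ialk + B^2 * M^2 * iali * ialk = 0" using inv by algebra
  have g36: "- A * B * M * N * iali * ialk * vk - A * B * M * iali + A * B * M^2 * iali * ialk - A^2 * M * N * iali * ialk + A^2 * N * iali + A^2 * N^2 * iali * ialk * vk = 0" using inv by algebra
  have g37: "- A * B * M * N * iali * ialk * vi - A * B * M * ialk + A * B * M^2 * iali * ialk - A^2 * M * N * iali * ialk + A^2 * N * ialk + A^2 * N^2 * iali * ialk * vi = 0" using inv by algebra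
  have main: "?L - ?R = (Ta)*(2 * B - B * M * iali - B * M * ialk + B * N * iali * vi + B * N * ialk * vk) + (Tb)*(2 * A - A * M * iali - A * M * ialk + A * N * iali * vi + A * N * ialk * vk) + (Za)*(2 * A * B * M * iali * ialk - A * B * N * iali * ialk * vi - A * B * N * iali * ialk * vk - A * B * iali - A * B * ialk - B^2 * M * iali * ialk * vi - B^2 * M * iali * ialk * vk + 2 * B^2 * N * iali * ialk * vi * vk + B^2 * iali * vi + B^2 * ialk * vk) + (Zb)*(- A * B * M * iali * ialk * vi - A * B * M * iali * ialk * vk + 2 * A * B * N * iali * ialk * vi * vk + A * B * iali * vi + A * B * ialk * vk + 2 * A^2 * M * iali * ialk - A^2 * N * iali * ialk * vi - A^2 * N * iali * ialk * vk - A^2 * iali - A^2 * ialk) + (aii * bi)*(- 2 * A * B * M * N^2 * iDe * iali^2 * igi * vi + 2 * A * B * M^2 * N * iDe * iali^2 * igi - A * N * iali * igi - A^2 * M * N^2 * iDe * iali^2 * igi + A^2 * N^3 * iDe * iali^2 * igi * vi + B * M * iali * igi + B^2 * M^2 * N * iDe * iali^2 * igi * vi - B^2 * M^3 * iDe * iali^2 * igi) + (aii * dik)*(2 * A * B * M * N * iali * ialk * igi * ivik - 2 * A * B * M * N * iali^2 * igi * ivik + 2 * A * B * M * N^2 * iali^2 * ialk * igi - A^2 * N^2 * iali * ialk * igi * ivik + A^2 * N^2 * iali^2 * igi * ivik - A^2 * N^3 * iali^2 * ialk * igi - B^2 * M^2 * N * iali^2 * ialk * igi - B^2 * M^2 *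 iali * ialk * igi * ivik + B^2 * M^2 * iali^2 * igi * ivik) + (aii * ni)*(- 2 * A * B * M * N * iali^2 * ialk * igi * vi + 2 * A * B * M * N * iali^2 * ialk * igi * vk - A * B * M * iali * ialk * igi - A * B * N * iali * ialk * igi * vk + 2 * A * B^2 * M * N * iDe * iali^2 * igi * vi + A * B^2 * M^2 * iDe * iali^2 * igi - 2 * A^2 * B * M * N * iDe * iali^2 * igi - A^2 * B * N^2 * iDe * iali^2 * igi * vi + A^2 * N * iali * ialk * igi + A^2 * N^2 * iali^2 * ialk * igi * vi - A^2 * N^2 * iali^2 * ialk * igi * vk + A^3 * N^2 * iDe * iali^2 * igi + B^2 * M * iali * ialk * igi * vk + B^2 * M^2 * iali^2 * ialk * igi * vi - B^2 * M^2 * iali^2 * ialk * igi * vk - B^3 * M^2 * iDe * iali^2 * igi * vi) + (akk * bk)*(- 2 * A * B * M * N^2 * iDe * ialk^2 * igk * vk + 2 * A * B * M^2 * N * iDe * ialk^2 * igk - A * N * ialk * igk - A^2 * M * N^2 * iDe * ialk^2 * igk + A^2 * N^3 * iDe * ialk^2 * igk * vk + B * M * ialk * igk + B^2 * M^2 * N * iDe * ialk^2 * igk * vk - B^2 * M^3 * iDe * ialk^2 * igk) + (akk * dki)*(- 2 * A * B * M * N * iali * ialk * igk * ivik + 2 * A * B * M * N * ialk^2 * igk * ivik + 2 * A * B * M * N^2 * iali * ialk^2 * igk + A^2 * N^2 * iali * ialk * igk * ivik - A^2 * N^2 * ialk^2 * igk * ivik - A^2 * N^3 * iali * ialk^2 *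 igk - B^2 * M^2 * N * iali * ialk^2 * igk + B^2 * M^2 * iali * ialk * igk * ivik - B^2 * M^2 * ialk^2 * igk * ivik) + (akk * nk)*(2 * A * B * M * N * iali * ialk^2 * igk * vi - 2 * A * B * M * N * iali * ialk^2 * igk * vk - A * B * M * iali * ialk * igk - A * B * N * iali * ialk * igk * vi + 2 * A * B^2 * M * N * iDe * ialk^2 * igk * vk + A * B^2 * M^2 * iDe * ialk^2 * igk - 2 * A^2 * B * M * N * iDe * ialk^2 * igk - A^2 * B * N^2 * iDe * ialk^2 * igk * vk + A^2 * N * iali * ialk * igk - A^2 * N^2 * iali * ialk^2 * igk * vi + A^2 * N^2 * iali * ialk^2 * igk * vk + A^3 * N^2 * iDe * ialk^2 * igk + B^2 * M * iali * ialk * igk * vi - B^2 * M^2 * iali * ialk^2 * igk * vi + B^2 * M^2 * iali * ialk^2 * igk * vk - B^3 * M^2 * iDe * ialk^2 * igk * vk) + (bbi)*(2 * A * B * M * N^2 * iDe * iali^2 * igi * vi - 2 * A * B * M^2 * N * iDe * iali^2 * igi + A * N * iali * igi + A^2 * M * N^2 * iDe * iali^2 * igi - A^2 * N^3 * iDe * iali^2 * igi * vi - B * M * iali * igi - B^2 * M^2 * N * iDe * iali^2 * igi * vi + B^2 * M^3 * iDe * iali^2 * igi) + (bbk)*(2 * A * B * M * N^2 * iDe * ialk^2 * igk * vk - 2 * A * B * M^2 * N * iDe * ialk^2 * igk + A * N * ialk * igk + A^2 * M * N^2 * iDe * ialk^2 * igk - A^2 * N^3 * iDe * ialk^2 * igk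 * vk - B * M * ialk * igk - B^2 * M^2 * N * iDe * ialk^2 * igk * vk + B^2 * M^3 * iDe * ialk^2 * igk) + (bi * dii)*(2 * A * B * M * N^2 * iDe * iali^2 * igi + 2 * A * B * M * N^3 * iDe * iali^3 * igi * vi - 2 * A * B * M^2 * N^2 * iDe * iali^3 * igi + A^2 * M * N^3 * iDe * iali^3 * igi - A^2 * N^3 * iDe * iali^2 * igi - A^2 * N^4 * iDe * iali^3 * igi * vi - B^2 * M^2 * N * iDe * iali^2 * igi - B^2 * M^2 * N^2 * iDe * iali^3 * igi * vi + B^2 * M^3 * N * iDe * iali^3 * igi) + (bi * dik)*(2 * A * B * M * N^2 * iDe * iali^2 * igi * ivik * vi - 2 * A * B * M * N^3 * iDe * iali^2 * ialk * igi * vi - 2 * A * B * M^2 * N * iDe * iali^2 * igi * ivik + 2 * A * B * M^2 * N^2 * iDe * iali^2 * ialk * igi + A * N * gk * ialk * igi * igk * ivik + A^2 * M * N^2 * iDe * iali^2 * igi * ivik - A^2 * M * N^3 * iDe * iali^2 * ialk * igi - A^2 * N^3 * iDe * iali^2 * igi * ivik * vi + A^2 * N^4 * iDe * iali^2 * ialk * igi * vi - B * M * gk * ialk * igi * igk * ivik - B^2 * M^2 * N * iDe * iali^2 * igi * ivik * vi + B^2 * M^2 * N^2 * iDe * iali^2 * ialk * igi * vi - B^2 * M^3 * N * iDe * iali^2 * ialk * igi + B^2 * M^3 * iDe * iali^2 * igi * ivik) + (bi * ni)*(- 2 * A * B * M * N^2 * iDe * iali^2 * ialk * igi * vi * vk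 + 2 * A * B * M * N^2 * iDe * iali^2 * ialk * igi * vi^2 - 2 * A * B * M^2 * N * iDe * iali^2 * ialk * igi * vi + 2 * A * B * M^2 * N * iDe * iali^2 * ialk * igi * vk - 4 * A * B^2 * M * N^2 * iDe^2 * iali^2 * igi * vi^2 + 2 * A * B^2 * M^2 * N * iDe^2 * iali^2 * igi * vi + 2 * A * B^2 * M^3 * iDe^2 * iali^2 * igi - A * iali * igi - A * ialk * igi + 2 * A^2 * B * M * N^2 * iDe^2 * iali^2 * igi * vi - 4 * A^2 * B * M^2 * N * iDe^2 * iali^2 * igi + 2 * A^2 * B * N^3 * iDe^2 * iali^2 * igi * vi^2 + A^2 * M * N^2 * iDe * iali^2 * ialk * igi * vi - A^2 * M * N^2 * iDe * iali^2 * ialk * igi * vk + A^2 * N^3 * iDe * iali^2 * ialk * igi * vi * vk - A^2 * N^3 * iDe * iali^2 * ialk * igi * vi^2 + 2 * A^3 * M * N^2 * iDe^2 * iali^2 * igi - 2 * A^3 * N^3 * iDe^2 * iali^2 * igi * vi + B * iali * igi * vi + B * ialk * igi * vk + B^2 * M^2 * N * iDe * iali^2 * ialk * igi * vi * vk - B^2 * M^2 * N * iDe * iali^2 * ialk * igi * vi^2 + B^2 * M^3 * iDe * iali^2 * ialk * igi * vi - B^2 * M^3 * iDe * iali^2 * ialk * igi * vk + 2 * B^3 * M^2 * N * iDe^2 * iali^2 * igi * vi^2 - 2 * B^3 * M^3 * iDe^2 * iali^2 * igi * vi) + (bi^2)*(2 * A * B * M * N^3 * iDe^2 * iali^2 *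 igi * vi^2 - 4 * A * B * M^2 * N^2 * iDe^2 * iali^2 * igi * vi + 2 * A * B * M^3 * N * iDe^2 * iali^2 * igi + 2 * A^2 * M * N^3 * iDe^2 * iali^2 * igi * vi - A^2 * M^2 * N^2 * iDe^2 * iali^2 * igi - A^2 * N^4 * iDe^2 * iali^2 * igi * vi^2 - B^2 * M^2 * N^2 * iDe^2 * iali^2 * igi * vi^2 + 2 * B^2 * M^3 * N * iDe^2 * iali^2 * igi * vi - B^2 * M^4 * iDe^2 * iali^2 * igi + igi) + (bk * dki)*(- 2 * A * B * M * N^2 * iDe * ialk^2 * igk * ivik * vk - 2 * A * B * M * N^3 * iDe * iali * ialk^2 * igk * vk + 2 * A * B * M^2 * N * iDe * ialk^2 * igk * ivik + 2 * A * B * M^2 * N^2 * iDe * iali * ialk^2 * igk - A * N * gi * iali * igi * igk * ivik - A^2 * M * N^2 * iDe * ialk^2 * igk * ivik - A^2 * M * N^3 * iDe * iali * ialk^2 * igk + A^2 * N^3 * iDe * ialk^2 * igk * ivik * vk + A^2 * N^4 * iDe * iali * ialk^2 * igk * vk + B * M * gi * iali * igi * igk * ivik + B^2 * M^2 * N * iDe * ialk^2 * igk * ivik * vk + B^2 * M^2 * N^2 * iDe * iali * ialk^2 * igk * vk - B^2 * M^3 * N * iDe * iali * ialk^2 * igk - B^2 * M^3 * iDe * ialk^2 * igk * ivik) + (bk * dkk)*(2 * A * B * M * N^2 * iDe * ialk^2 * igk + 2 * A * B * M * N^3 * iDe * ialk^3 * igk * vk - 2 * A * B * M^2 * N^2 *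 iDe * ialk^3 * igk + A^2 * M * N^3 * iDe * ialk^3 * igk - A^2 * N^3 * iDe * ialk^2 * igk - A^2 * N^4 * iDe * ialk^3 * igk * vk - B^2 * M^2 * N * iDe * ialk^2 * igk - B^2 * M^2 * N^2 * iDe * ialk^3 * igk * vk + B^2 * M^3 * N * iDe * ialk^3 * igk) + (bk * nk)*(- 2 * A * B * M * N^2 * iDe * iali * ialk^2 * igk * vi * vk + 2 * A * B * M * N^2 * iDe * iali * ialk^2 * igk * vk^2 + 2 * A * B * M^2 * N * iDe * iali * ialk^2 * igk * vi - 2 * A * B * M^2 * N * iDe * iali * ialk^2 * igk * vk - 4 * A * B^2 * M * N^2 * iDe^2 * ialk^2 * igk * vk^2 + 2 * A * B^2 * M^2 * N * iDe^2 * ialk^2 * igk * vk + 2 * A * B^2 * M^3 * iDe^2 * ialk^2 * igk - A * iali * igk - A * ialk * igk + 2 * A^2 * B * M * N^2 * iDe^2 * ialk^2 * igk * vk - 4 * A^2 * B * M^2 * N * iDe^2 * ialk^2 * igk + 2 * A^2 * B * N^3 * iDe^2 * ialk^2 * igk * vk^2 - A^2 * M * N^2 * iDe * iali * ialk^2 * igk * vi + A^2 * M * N^2 * iDe * iali * ialk^2 * igk * vk + A^2 * N^3 * iDe * iali * ialk^2 * igk * vi * vk - A^2 * N^3 * iDe * iali * ialk^2 * igk * vk^2 + 2 * A^3 * M * N^2 * iDe^2 * ialk^2 * igk - 2 * A^3 * N^3 * iDe^2 * ialk^2 * igk * vk + B * iali * igk * vi + B * ialk * igk * vk + B^2 * M^2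 * N * iDe * iali * ialk^2 * igk * vi * vk - B^2 * M^2 * N * iDe * iali * ialk^2 * igk * vk^2 - B^2 * M^3 * iDe * iali * ialk^2 * igk * vi + B^2 * M^3 * iDe * iali * ialk^2 * igk * vk + 2 * B^3 * M^2 * N * iDe^2 * ialk^2 * igk * vk^2 - 2 * B^3 * M^3 * iDe^2 * ialk^2 * igk * vk) + (bk^2)*(2 * A * B * M * N^3 * iDe^2 * ialk^2 * igk * vk^2 - 4 * A * B * M^2 * N^2 * iDe^2 * ialk^2 * igk * vk + 2 * A * B * M^3 * N * iDe^2 * ialk^2 * igk + 2 * A^2 * M * N^3 * iDe^2 * ialk^2 * igk * vk - A^2 * M^2 * N^2 * iDe^2 * ialk^2 * igk - A^2 * N^4 * iDe^2 * ialk^2 * igk * vk^2 - B^2 * M^2 * N^2 * iDe^2 * ialk^2 * igk * vk^2 + 2 * B^2 * M^3 * N * iDe^2 * ialk^2 * igk * vk - B^2 * M^4 * iDe^2 * ialk^2 * igk + igk) + (ddik)*(- 2 * A * B * M * N * iali * ialk * igi * ivik^2 * vi + 2 * A * B * M * N * iali * ialk * igi * ivik^2 * vk + 2 * A * B * M * N * iali^2 * igi * ivik^2 * vi - 2 * A * B * M * N * iali^2 * igi * ivik^2 * vk - 2 * A * B * M * N^2 * iali^2 * ialk * igi + A^2 * N^2 * iali * ialk * igi * ivik^2 * vi - A^2 * N^2 * iali * ialk * igi * ivik^2 * vk - A^2 * N^2 * iali^2 * igi * ivik^2 * vi + A^2 * N^2 * iali^2 * igi * ivik^2 * vk + A^2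 * N^3 * iali^2 * ialk * igi + B^2 * M^2 * N * iali^2 * ialk * igi + B^2 * M^2 * iali * ialk * igi * ivik^2 * vi - B^2 * M^2 * iali * ialk * igi * ivik^2 * vk - B^2 * M^2 * iali^2 * igi * ivik^2 * vi + B^2 * M^2 * iali^2 * igi * ivik^2 * vk) + (ddki)*(2 * A * B * M * N * iali * ialk * igk * ivik^2 * vi - 2 * A * B * M * N * iali * ialk * igk * ivik^2 * vk - 2 * A * B * M * N * ialk^2 * igk * ivik^2 * vi + 2 * A * B * M * N * ialk^2 * igk * ivik^2 * vk - 2 * A * B * M * N^2 * iali * ialk^2 * igk - A^2 * N^2 * iali * ialk * igk * ivik^2 * vi + A^2 * N^2 * iali * ialk * igk * ivik^2 * vk + A^2 * N^2 * ialk^2 * igk * ivik^2 * vi - A^2 * N^2 * ialk^2 * igk * ivik^2 * vk + A^2 * N^3 * iali * ialk^2 * igk + B^2 * M^2 * N * iali * ialk^2 * igk - B^2 * M^2 * iali * ialk * igk * ivik^2 * vi + B^2 * M^2 * iali * ialk * igk * ivik^2 * vk + B^2 * M^2 * ialk^2 * igk * ivik^2 * vi - B^2 * M^2 * ialk^2 * igk * ivik^2 * vk) + (dii * dik)*(2 * A * B * M * N * iali * ialk * igi * ivik^2 - 2 * A * B * M * N * iali^2 * igi * ivik^2 + 2 * A * B * M * N^2 * iali^3 * igi * ivik - 2 * A * B * M * N^3 * iali^3 * ialk * igi - A^2 * N^2 * iali * ialk * igi * ivik^2 + A^2 * N^2 * iali^2 * igi * ivik^2 - A^2 * N^3 * iali^3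 * igi * ivik + A^2 * N^4 * iali^3 * ialk * igi - B^2 * M^2 * N * iali^3 * igi * ivik + B^2 * M^2 * N^2 * iali^3 * ialk * igi - B^2 * M^2 * iali * ialk * igi * ivik^2 + B^2 * M^2 * iali^2 * igi * ivik^2) + (dii * ni)*(2 * A * B * M * N * iali^2 * ialk * igi + 2 * A * B * M * N^2 * iali^3 * ialk * igi * vi - 2 * A * B * M * N^2 * iali^3 * ialk * igi * vk - 2 * A * B^2 * M * N * iDe * iali^2 * igi - 2 * A * B^2 * M * N^2 * iDe * iali^3 * igi * vi - A * B^2 * M^2 * N * iDe * iali^3 * igi + 2 * A^2 * B * M * N^2 * iDe * iali^3 * igi + A^2 * B * N^2 * iDe * iali^2 * igi + A^2 * B * N^3 * iDe * iali^3 * igi * vi - A^2 * N^2 * iali^2 * ialk * igi - A^2 * N^3 * iali^3 * ialk * igi * vi + A^2 * N^3 * iali^3 * ialk * igi * vk - A^3 * N^3 * iDe * iali^3 * igi - B^2 * M^2 * N * iali^3 * ialk * igi * vi + B^2 * M^2 * N * iali^3 * ialk * igi * vk - B^2 * M^2 * iali^2 * ialk * igi + B^3 * M^2 * N * iDe * iali^3 * igi * vi + B^3 * M^2 * iDe * iali^2 * igi) + (dik * ni)*(- 4 * A * B * M * N * iali^2 * ialk * igi + 4 * A * B * M * N * iali^2 * ialk * igi * ivik * vi - 4 * A * B * M * N * iali^2 * ialk * igi * ivik * vk + A * B * M * gk * iali * ialk * igi * igk * ivik + A * B * N * gk * iali * ialk * igi * igk * ivik * vi - 2 * A * B^2 *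 M * N * iDe * iali^2 * igi * ivik * vi + 2 * A * B^2 * M * N^2 * iDe * iali^2 * ialk * igi * vi + A * B^2 * M^2 * N * iDe * iali^2 * ialk * igi - A * B^2 * M^2 * iDe * iali^2 * igi * ivik + 2 * A^2 * B * M * N * iDe * iali^2 * igi * ivik - 2 * A^2 * B * M * N^2 * iDe * iali^2 * ialk * igi + A^2 * B * N^2 * iDe * iali^2 * igi * ivik * vi - A^2 * B * N^3 * iDe * iali^2 * ialk * igi * vi - A^2 * N * gk * iali * ialk * igi * igk * ivik + 2 * A^2 * N^2 * iali^2 * ialk * igi - 2 * A^2 * N^2 * iali^2 * ialk * igi * ivik * vi + 2 * A^2 * N^2 * iali^2 * ialk * igi * ivik * vk - A^3 * N^2 * iDe * iali^2 * igi * ivik + A^3 * N^3 * iDe * iali^2 * ialk * igi - B^2 * M * gk * iali * ialk * igi * igk * ivik * vi + 2 * B^2 * M^2 * iali^2 * ialk * igi - 2 * B^2 * M^2 * iali^2 * ialk * igi * ivik * vi + 2 * B^2 * M^2 * iali^2 * ialk * igi * ivik * vk - B^3 * M^2 * N * iDe * iali^2 * ialk * igi * vi + B^3 * M^2 * iDe * iali^2 * igi * ivik * vi) + (dik^2)*(- 4 * A * B * M * N * iali * ialk * igi * ivik^2 + 4 * A * B * M * N * iali^2 * igi * ivik^2 - 4 * A * B * M * N^2 * iali^2 * ialk * igi * ivik + 2 * A^2 * N^2 * iali * ialk * igi * ivik^2 - 2 * A^2 * N^2 * iali^2 * igi * ivik^2 + 2 * A^2 * N^3 * iali^2 * ialk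 * igi * ivik + 2 * B^2 * M^2 * N * iali^2 * ialk * igi * ivik + 2 * B^2 * M^2 * iali * ialk * igi * ivik^2 - 2 * B^2 * M^2 * iali^2 * igi * ivik^2) + (dki * dkk)*(2 * A * B * M * N * iali * ialk * igk * ivik^2 - 2 * A * B * M * N * ialk^2 * igk * ivik^2 - 2 * A * B * M * N^2 * ialk^3 * igk * ivik - 2 * A * B * M * N^3 * iali * ialk^3 * igk - A^2 * N^2 * iali * ialk * igk * ivik^2 + A^2 * N^2 * ialk^2 * igk * ivik^2 + A^2 * N^3 * ialk^3 * igk * ivik + A^2 * N^4 * iali * ialk^3 * igk + B^2 * M^2 * N * ialk^3 * igk * ivik + B^2 * M^2 * N^2 * iali * ialk^3 * igk - B^2 * M^2 * iali * ialk * igk * ivik^2 + B^2 * M^2 * ialk^2 * igk * ivik^2) + (dki * nk)*(- 4 * A * B * M * N * iali * ialk^2 * igk + 4 * A * B * M * N * iali * ialk^2 * igk * ivik * vi - 4 * A * B * M * N * iali * ialk^2 * igk * ivik * vk - A * B * M * gi * iali * ialk * igi * igk * ivik - A * B * N * gi * iali * ialk * igi * igk * ivik * vk + 2 * A * B^2 * M * N * iDe * ialk^2 * igk * ivik * vk + 2 * A * B^2 * M * N^2 * iDe * iali * ialk^2 * igk * vk + A * B^2 * M^2 * N * iDe * iali * ialk^2 * igk + A * B^2 * M^2 * iDe * ialk^2 * igk * ivik - 2 * A^2 * B * M * N * iDe * ialk^2 * igk * ivik - 2 * A^2 * B * M * N^2 * iDe * iali * ialk^2 * igk - A^2 * B *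 N^2 * iDe * ialk^2 * igk * ivik * vk - A^2 * B * N^3 * iDe * iali * ialk^2 * igk * vk + A^2 * N * gi * iali * ialk * igi * igk * ivik + 2 * A^2 * N^2 * iali * ialk^2 * igk - 2 * A^2 * N^2 * iali * ialk^2 * igk * ivik * vi + 2 * A^2 * N^2 * iali * ialk^2 * igk * ivik * vk + A^3 * N^2 * iDe * ialk^2 * igk * ivik + A^3 * N^3 * iDe * iali * ialk^2 * igk + B^2 * M * gi * iali * ialk * igi * igk * ivik * vk + 2 * B^2 * M^2 * iali * ialk^2 * igk - 2 * B^2 * M^2 * iali * ialk^2 * igk * ivik * vi + 2 * B^2 * M^2 * iali * ialk^2 * igk * ivik * vk - B^3 * M^2 * N * iDe * iali * ialk^2 * igk * vk - B^3 * M^2 * iDe * ialk^2 * igk * ivik * vk) + (dki^2)*(- 4 * A * B * M * N * iali * ialk * igk * ivik^2 + 4 * A * B * M * N * ialk^2 * igk * ivik^2 + 4 * A * B * M * N^2 * iali * ialk^2 * igk * ivik + 2 * A^2 * N^2 * iali * ialk * igk * ivik^2 - 2 * A^2 * N^2 * ialk^2 * igk * ivik^2 - 2 * A^2 * N^3 * iali * ialk^2 * igk * ivik - 2 * B^2 * M^2 * N * iali * ialk^2 * igk * ivik + 2 * B^2 * M^2 * iali * ialk * igk * ivik^2 - 2 * B^2 * M^2 * ialk^2 * igk * ivik^2) + (dkk * nk)*(2 * A * B * M * N * iali * ialk^2 * igk - 2 * A * B * M * N^2 * iali * ialk^3 * igk * vi + 2 * A * B * M * N^2 * iali * ialk^3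 * igk * vk - 2 * A * B^2 * M * N * iDe * ialk^2 * igk - 2 * A * B^2 * M * N^2 * iDe * ialk^3 * igk * vk - A * B^2 * M^2 * N * iDe * ialk^3 * igk + 2 * A^2 * B * M * N^2 * iDe * ialk^3 * igk + A^2 * B * N^2 * iDe * ialk^2 * igk + A^2 * B * N^3 * iDe * ialk^3 * igk * vk - A^2 * N^2 * iali * ialk^2 * igk + A^2 * N^3 * iali * ialk^3 * igk * vi - A^2 * N^3 * iali * ialk^3 * igk * vk - A^3 * N^3 * iDe * ialk^3 * igk + B^2 * M^2 * N * iali * ialk^3 * igk * vi - B^2 * M^2 * N * iali * ialk^3 * igk * vk - B^2 * M^2 * iali * ialk^2 * igk + B^3 * M^2 * N * iDe * ialk^3 * igk * vk + B^3 * M^2 * iDe * ialk^2 * igk) + (ni^2)*(- A * B * iali * ialk * igi * vi - A * B * iali * ialk * igi * vk + 2 * A * B^2 * M * N * iDe * iali^2 * ialk * igi * vi * vk - 2 * A * B^2 * M * N * iDe * iali^2 * ialk * igi * vi^2 - A * B^2 * M^2 * iDe * iali^2 * ialk * igi * vi + A * B^2 * M^2 * iDe * iali^2 * ialk * igi * vk + 2 * A * B^3 * M * N * iDe^2 * iali^2 * igi * vi^2 + 2 * A * B^3 * M^2 * iDe^2 * iali^2 * igi * vi + 2 * A^2 * B * M * N * iDe * iali^2 * ialk * igi * vi - 2 * A^2 * B * M * N * iDe * iali^2 * ialk * igi * vk - A^2 * B * N^2 * iDe * iali^2 * ialk * igi * vi * vk + A^2 * B * N^2 * iDe * iali^2 *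 ialk * igi * vi^2 - 4 * A^2 * B^2 * M * N * iDe^2 * iali^2 * igi * vi - A^2 * B^2 * M^2 * iDe^2 * iali^2 * igi - A^2 * B^2 * N^2 * iDe^2 * iali^2 * igi * vi^2 + A^2 * iali * ialk * igi + 2 * A^3 * B * M * N * iDe^2 * iali^2 * igi + 2 * A^3 * B * N^2 * iDe^2 * iali^2 * igi * vi - A^3 * N^2 * iDe * iali^2 * ialk * igi * vi + A^3 * N^2 * iDe * iali^2 * ialk * igi * vk - A^4 * N^2 * iDe^2 * iali^2 * igi + B^2 * iali * ialk * igi * vi * vk - B^3 * M^2 * iDe * iali^2 * ialk * igi * vi * vk + B^3 * M^2 * iDe * iali^2 * ialk * igi * vi^2 - B^4 * M^2 * iDe^2 * iali^2 * igi * vi^2) + (nk^2)*(- A * B * iali * ialk * igk * vi - A * B * iali * ialk * igk * vk + 2 * A * B^2 * M * N * iDe * iali * ialk^2 * igk * vi * vk - 2 * A * B^2 * M * N * iDe * iali * ialk^2 * igk * vk^2 + A * B^2 * M^2 * iDe * iali * ialk^2 * igk * vi - A * B^2 * M^2 * iDe * iali * ialk^2 * igk * vk + 2 * A * B^3 * M * N * iDe^2 * ialk^2 * igk * vk^2 + 2 * A * B^3 * M^2 * iDe^2 * ialk^2 * igk * vk - 2 * A^2 * B * M * N * iDe * iali * ialk^2 * igk * vi + 2 * A^2 * B * M * N * iDe * iali * ialk^2 * igk * vk - A^2 * B * N^2 * iDe * iali * ialk^2 * igk * vi * vk + A^2 * B * N^2 * iDe * iali * ialk^2 * igk * vk^2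 - 4 * A^2 * B^2 * M * N * iDe^2 * ialk^2 * igk * vk - A^2 * B^2 * M^2 * iDe^2 * ialk^2 * igk - A^2 * B^2 * N^2 * iDe^2 * ialk^2 * igk * vk^2 + A^2 * iali * ialk * igk + 2 * A^3 * B * M * N * iDe^2 * ialk^2 * igk + 2 * A^3 * B * N^2 * iDe^2 * ialk^2 * igk * vk + A^3 * N^2 * iDe * iali * ialk^2 * igk * vi - A^3 * N^2 * iDe * iali * ialk^2 * igk * vk - A^4 * N^2 * iDe^2 * ialk^2 * igk + B^2 * iali * ialk * igk * vi * vk - B^3 * M^2 * iDe * iali * ialk^2 * igk * vi * vk + B^3 * M^2 * iDe * iali * ialk^2 * igk * vk^2 - B^4 * M^2 * iDe^2 * ialk^2 * igk * vk^2) + (nni)*(2 * A * B * M * N * iali^2 * ialk * igi * vi - 2 * A * B * M * N * iali^2 * ialk * igi * vk + A * B * M * iali * ialk * igi + A * B * N * iali * ialk * igi * vk - 2 * A * B^2 * M * N * iDe * iali^2 * igi * vi - A * B^2 * M^2 * iDe * iali^2 * igi + 2 * A^2 * B * M * N * iDe * iali^2 * igi + A^2 * B * N^2 * iDe * iali^2 * igi * vi - A^2 * N * iali * ialk * igi - A^2 * N^2 * iali^2 * ialk * igi * vi + A^2 * N^2 * iali^2 * ialk * igi * vk - A^3 * N^2 * iDe * iali^2 * igi - B^2 * M * iali * ialk * igi * vk - B^2 * M^2 * iali^2 * ialk * igi * vi + B^2 * M^2 * iali^2 * ialk * igi * vk + B^3 * M^2 * iDe * iali^2 * igi * vi) + (nnk)*(-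 2 * A * B * M * N * iali * ialk^2 * igk * vi + 2 * A * B * M * N * iali * ialk^2 * igk * vk + A * B * M * iali * ialk * igk + A * B * N * iali * ialk * igk * vi - 2 * A * B^2 * M * N * iDe * ialk^2 * igk * vk - A * B^2 * M^2 * iDe * ialk^2 * igk + 2 * A^2 * B * M * N * iDe * ialk^2 * igk + A^2 * B * N^2 * iDe * ialk^2 * igk * vk - A^2 * N * iali * ialk * igk + A^2 * N^2 * iali * ialk^2 * igk * vi - A^2 * N^2 * iali * ialk^2 * igk * vk - A^3 * N^2 * iDe * ialk^2 * igk - B^2 * M * iali * ialk * igk * vi + B^2 * M^2 * iali * ialk^2 * igk * vi - B^2 * M^2 * iali * ialk^2 * igk * vk + B^3 * M^2 * iDe * ialk^2 * igk * vk) + (w1i)*(- A * B * M * N * iali * ialk + A * B * N * iali + A * B * N^2 * iali * ialk * vk - B^2 * M * N * iali * ialk * vk - B^2 * M * iali + B^2 * M^2 * iali * ialk) + (w1k)*(- A * B * M * N * iali * ialk + A * B * N * ialk + A * B * N^2 * iali * ialk * vi - B^2 * M * N * iali * ialk * vi - B^2 * M * ialk + B^2 * M^2 * iali * ialk) + (w2i)*(- A * B * M * N * iali * ialk * vk - A * B * M * iali + A * B * M^2 * iali * ialk - A^2 * M * N * iali * ialk + A^2 * N * iali + A^2 * N^2 * iali * ialk * vk) + (w2k)*(- A * B * M * N * iali * ialk * vi - A * B * M * ialk + A * B * M^2 * iali * ialk - A^2 * M * N * iali * ialk + A^2 * N * ialk + A^2 * N^2 * iali * ialk * vi)"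
    unfolding daik daki dpik dpki dpii dpkk dpdaik dpdaki dpdpik dpdpki dlapBi dlapBk dlapNi dlapNk dPS dQ dRR dhvi dhvk drhoi drhok dDe
    by algebra
  have "?L - ?R = 0" unfolding main by (simp only: g0 g1 g2 g3 g4 g5 g6 g7 g8 g9 g10 g11 g12 g13 g14 g15 g16 g17 g18 g19 g20 g21 g22 g23 g24 g25 g26 g27 g28 g29 g30 g31 g32 g33 g34 g35 g36 g37 mult_zero_right add_0_right)
  then show ?thesis by simp
qed

lemma neat0:
  fixes vi vm dvi bm nm B A N M aim ali alm De :: real
  assumes nz: "ali \<noteq> 0" "alm \<noteq> 0" "De \<noteq> 0"
    and e: "ali = M - N * vi" "alm = M - N * vm" "De = B * M - A * N" "dvi = aim * (vm - vi)"
  shows "(De / alm) * (aim + ((vm * nm - (nm * vi + N * dvi)) / ali - (bm * M + B * (vm * nm) - (vm * bm * N + A * nm)) / De))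
       = (De / ali) * aim - (bm + ((B * vi - A) / ali) * nm)"
  using nz by (simp add: field_simps) (simp add: e, algebra)

lemma neat:
  fixes vi vm dvi bm nm B A N M aim :: real
  assumes "M - N * vi \<noteq> 0" "M - N * vm \<noteq> 0" "B * M - A * N \<noteq> 0" "dvi = aim * (vm - vi)"
  shows "((B * M - A * N) / (M - N * vm)) * (aim + ((vm * nm - (nm * vi + N * dvi)) / (M - N * vi) - (bm * M + B * (vm * nm) - (vm * bm * N + A * nm)) / (B * M - A * N)))
       = ((B * M - A * N) / (M - N * vi)) * aim - (bm + ((B * vi - A) / (M - N * vi)) * nm)"
  by (rule neat0[OF assms(1-3) refl refl refl assms(4)])

lemma rest_core:
  fixes rhoi rhok rhom hvi hvk ahi ahk aim akm gm gi gk bm nm igi igk ghm :: real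
  assumes h: "rhom * ahi = rhoi * aim - (bm + hvi * nm)" "rhom * ahk = rhok * akm - (bm + hvk * nm)"
    and nz: "gm \<noteq> 0" "rhom \<noteq> 0" "gi \<noteq> 0" "gk \<noteq> 0"
    and ig: "igi = 1 / gi" "igk = 1 / gk" and gh: "ghm = gm / rhom^2"
  shows "- (ahi * ahk / ghm) + rhoi * rhok * (aim * akm / gm)
     = hvk * rhoi * (- igi) * ((- aim * gi / gm) * nm) + hvi * rhok * (- igk) * ((- akm * gk / gm) * nm)
       + rhoi * (- igi) * ((- aim * gi / gm) * bm) + rhok * (- igk) * ((- akm * gk / gm) * bm)
       - hvi * hvk * ((1 / gm) * nm^2) - (1 / gm) * bm^2 - (hvi + hvk) * ((1 / gm) * nm * bm)"
proof -
  have "ahi * ahk / ghm = (rhom * ahi) * (rhom * ahk) / gm" using nz unfolding gh by (simp add: field_simps power2_eq_square)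
  also have "\<dots> = (rhoi * aim - (bm + hvi * nm)) * (rhok * akm - (bm + hvk * nm)) / gm" unfolding h ..
  finally have e: "ahi * ahk / ghm = (rhoi * aim - (bm + hvi * nm)) * (rhok * akm - (bm + hvk * nm)) / gm" .
  show ?thesis unfolding e ig using nz by (simp add: field_simps power2_eq_square)
qed


lemma alg_lame0:
  fixes vi vj dvi bj nj B A N M a b d e :: real
  assumes nz: "a \<noteq> 0" "b \<noteq> 0" "d \<noteq> 0" "e \<noteq> 0"
    and ea: "a = M - N * vi" and eb: "b = M - N * vj" and ed: "d = B * M - A * N" and ee: "e = vj - vi"
  shows "dvi / e + ((vj * nj - (nj * vi + N * dvi)) / a - (bj * M + B * (vj * nj) - (vj * bj * N + A * nj)) / d)
   = ((bj * vi + B * dvi - vj * bj) * a - (B * vi - A) * (vj * nj - (nj * vi + N * dvi))) / a^2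
     / ((B * vj - A) / b - (B * vi - A) / a)"
proof -
  have e: "(B * vj - A) / b - (B * vi - A) / a = d * e / (a * b)"
    using nz by (simp add: field_simps) (simp add: ea eb ed ee algebra_simps)
  show ?thesis unfolding e using nz by (simp add: field_simps) (simp add: ea eb ed ee, algebra)
qed

lemma alg_lame:
  fixes vi vj dvi bj nj B A N M :: real
  assumes "M - N * vi \<noteq> 0" "M - N * vj \<noteq> 0" "B * M - A * N \<noteq> 0" "vj - vi \<noteq> 0"
  shows "dvi / (vj - vi) + ((vj * nj - (nj * vi + N * dvi)) / (M - N * vi) - (bj * M + B * (vj * nj) - (vj * bj * N + A * nj)) / (B * M - A * N))
   = ((bj * vi + B * dvi - vj * bj) * (M - N * vi) - (B * vi - A) * (vj * nj - (nj * vi + N * dvi))) / (M - N * vi)^2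
     / ((B * vj - A) / (M - N * vj) - (B * vi - A) / (M - N * vi))"
  by (rule alg_lame0[OF assms refl refl refl refl])

locale recip =
  fixes U :: "(real^'n::finite) set" and v g :: "'n \<Rightarrow> real^'n \<Rightarrow> real" and A B M N :: "real^'n \<Rightarrow> real"
  assumes U: "open U"
    and hyp: "strictly_hyperbolic U v"
    and metric: "metric_of_system U v g"
    and claw1: "conservation_law U v B A" and claw2: "conservation_law U v N M"
    and nondeg: "\<forall>u\<in>U. B u * M u - A u * N u \<noteq> 0"
    and denom: "\<forall>u\<in>U. \<forall>i. M u - N u * v i u \<noteq> 0"
begin

lemma smv: "smooth_on U (v i)" using hyp unfolding strictly_hyperbolic_def by blast
lemma vdist: "y \<in> U \<Longrightarrow> i \<noteq> j \<Longrightarrow> v i y \<noteq> v j y" using hyp unfolding strictly_hyperbolic_def by blast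
lemma smg: "smooth_on U (g i)" using metric unfolding metric_of_system_def diag_metric_def by blast
lemma gnz: "y \<in> U \<Longrightarrow> g i y \<noteq> 0" using metric unfolding metric_of_system_def diag_metric_def by blast
lemma lameg: "lame_cond U v g" using metric unfolding metric_of_system_def by blast
lemma smA: "smooth_on U A" and smB: "smooth_on U B" and smM: "smooth_on U M" and smN: "smooth_on U N"
  using claw1 claw2 unfolding conservation_law_def by blast+
lemma cA: "y \<in> U \<Longrightarrow> pd j A y = v j y * pd j B y" using claw1 unfolding conservation_law_def by blast
lemma cM: "y \<in> U \<Longrightarrow> pd j M y = v j y * pd j N y" using claw2 unfolding conservation_law_def by blast
lemma Dnz: "y \<in> U \<Longrightarrow> B y * M y - A y * N y \<noteq> 0" using nondeg by blast
lemma alnz: "y \<in> U \<Longrightarrow> M y - N y * v i y \<noteq> 0" using denom by blast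

lemma aGg_lame: "y \<in> U \<Longrightarrow> i \<noteq> j \<Longrightarrow> aG g i j y = pd j (v i) y / (v j y - v i y)"
  using lameg unfolding lame_cond_def aG_def by blast

lemmas sm_all = smv smg smA smB smM smN smooth_pd[OF smv] smooth_pd[OF smg] smooth_pd[OF smA]
  smooth_pd[OF smB] smooth_pd[OF smM] smooth_pd[OF smN]
  smooth_pd[OF smooth_pd[OF smv]] smooth_pd[OF smooth_pd[OF smB]] smooth_pd[OF smooth_pd[OF smN]]

lemma dfs:
  assumes "y \<in> U"
  shows "v i differentiable (at y)" "g i differentiable (at y)" "A differentiable (at y)" "B differentiable (at y)"
    "M differentiable (at y)" "N differentiable (at y)"
    "pd j (v i) differentiable (at y)" "pd j (g i) differentiable (at y)" "pd j A differentiable (at y)"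
    "pd j B differentiable (at y)" "pd j M differentiable (at y)" "pd j N differentiable (at y)"
  using smooth_diff_at[OF U _ assms] sm_all by blast+

lemma alg_aGh:
  fixes a d G dG P Q :: real
  assumes "a \<noteq> 0" "d \<noteq> 0" "G \<noteq> 0"
  shows "(2 * (a / d) * ((P * d - a * Q) / d^2) * G + (a / d)^2 * dG) / (2 * ((a / d)^2 * G))
       = dG / (2 * G) + (P / a - Q / d)"
  using assms by (simp add: field_simps power2_eq_square)

abbreviation "gh \<equiv> recip_g g v B A N M"
abbreviation "vh \<equiv> recip_v v B A N M"

definition PA :: "'n \<Rightarrow> 'n \<Rightarrow> real^'n \<Rightarrow> real" where
  "PA l j y = v j y * pd j N y - (pd j N y * v l y + N y * pd j (v l) y)"
definition PD :: "'n \<Rightarrow> real^'n \<Rightarrow> real" where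
  "PD j y = pd j B y * M y + B y * (v j y * pd j N y) - (v j y * pd j B y * N y + A y * pd j N y)"

lemma gh_eq: "gh l = (\<lambda>u. ((M u - N u * v l u) / (B u * M u - A u * N u))^2 * g l u)"
  by (rule ext) (simp add: recip_g_def)

lemma vh_eq: "vh l = (\<lambda>u. (B u * v l u - A u) / (M u - N u * v l u))"
  by (rule ext) (simp add: recip_v_def)

lemma pd_al: "y \<in> U \<Longrightarrow> pd j (\<lambda>u. M u - N u * v l u) y = PA l j y"
  using dfs[of y] cM[of y] unfolding PA_def by simp

lemma pd_De: "y \<in> U \<Longrightarrow> pd j (\<lambda>u. B u * M u - A u * N u) y = PD j y"
  using dfs[of y] cM[of y] cA[of y] unfolding PD_def by simp

lemma aGh:
  assumes y: "y \<in> U"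
  shows "aG gh l j y = aG g l j y + (PA l j y / (M y - N y * v l y) - PD j y / (B y * M y - A y * N y))"
proof -
  have d1: "(\<lambda>u. M u - N u * v l u) differentiable (at y)" "(\<lambda>u. B u * M u - A u * N u) differentiable (at y)"
    using dfs[OF y] by auto
  have d2: "(\<lambda>u. (M u - N u * v l u) / (B u * M u - A u * N u)) differentiable (at y)"
    using d1 Dnz[OF y] by auto
  have d3: "(\<lambda>u. ((M u - N u * v l u) / (B u * M u - A u * N u))^2) differentiable (at y)"
    using d2 by auto
  have "pd j (gh l) y = pd j (\<lambda>u. ((M u - N u * v l u) / (B u * M u - A u * N u))^2) y * g l y
      + ((M y - N y * v l y) / (B y * M y - A y * N y))^2 * pd j (g l) y"
    unfolding gh_eq using d3 dfs[OF y] by simp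
  also have "pd j (\<lambda>u. ((M u - N u * v l u) / (B u * M u - A u * N u))^2) y
     = 2 * ((M y - N y * v l y) / (B y * M y - A y * N y)) *
        ((PA l j y * (B y * M y - A y * N y) - (M y - N y * v l y) * PD j y) / (B y * M y - A y * N y)^2)"
    using d1 d2 Dnz[OF y] pd_al[OF y] pd_De[OF y] by simp
  finally have e: "pd j (gh l) y = 2 * ((M y - N y * v l y) / (B y * M y - A y * N y)) *
        ((PA l j y * (B y * M y - A y * N y) - (M y - N y * v l y) * PD j y) / (B y * M y - A y * N y)^2) * g l y
      + ((M y - N y * v l y) / (B y * M y - A y * N y))^2 * pd j (g l) y" .
  have gh_y: "gh l y = ((M y - N y * v l y) / (B y * M y - A y * N y))^2 * g l y"
    by (simp add: gh_eq)
  show ?thesis unfolding aG_def e gh_y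
    by (rule alg_aGh[OF alnz[OF y] Dnz[OF y] gnz[OF y]])
qed

lemma pd_vh:
  assumes y: "y \<in> U"
  shows "pd j (vh i) y = ((pd j B y * v i y + B y * pd j (v i) y - v j y * pd j B y) * (M y - N y * v i y)
     - (B y * v i y - A y) * PA i j y) / (M y - N y * v i y)^2"
proof -
  have d1: "(\<lambda>u. M u - N u * v i u) differentiable (at y)" "(\<lambda>u. B u * v i u - A u) differentiable (at y)"
    using dfs[OF y] by auto
  show ?thesis unfolding vh_eq using d1 alnz[OF y] pd_al[OF y] dfs[OF y] cA[OF y] by simp
qed

lemma lame_h: "lame_cond U vh gh"
  unfolding lame_cond_def
proof (intro ballI allI impI)
  fix y and i j :: 'n assume y: "y \<in> U" and ij: "i \<noteq> j"
  have vv: "v j y - v i y \<noteq> 0" using vdist[OF y ij] by auto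
  have "pd j (gh i) y / (2 * gh i y) = aG gh i j y" by (simp add: aG_def)
  also have "\<dots> = pd j (vh i) y / (vh j y - vh i y)"
    unfolding aGh[OF y] aGg_lame[OF y ij] pd_vh[OF y] PA_def PD_def
    unfolding recip_v_def
    by (rule alg_lame[OF alnz[OF y] alnz[OF y] Dnz[OF y] vv])
  finally show "pd j (gh i) y / (2 * gh i y) = pd j (vh i) y / (vh j y - vh i y)" .
qed

lemma smooth_gh: "smooth_on U (gh i)"
  unfolding gh_eq
  by (intro smooth_mult[OF U] smooth_power2[OF U] smooth_divide[OF U] smooth_diff[OF U] smg smA smB smM smN smv ballI Dnz)

lemma smooth_vh: "smooth_on U (vh i)"
  unfolding vh_eq
  by (intro smooth_mult[OF U] smooth_divide[OF U] smooth_diff[OF U] smA smB smM smN smv ballI alnz)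

lemma gh_nz: "y \<in> U \<Longrightarrow> gh i y \<noteq> 0"
  using alnz[of y i] Dnz[of y] gnz[of y i] by (simp add: recip_g_def)

lemma vh_dist: "y \<in> U \<Longrightarrow> i \<noteq> j \<Longrightarrow> vh i y \<noteq> vh j y"
proof
  assume y: "y \<in> U" and ij: "i \<noteq> j" and eq: "vh i y = vh j y"
  have "(B y * v i y - A y) * (M y - N y * v j y) = (B y * v j y - A y) * (M y - N y * v i y)"
    using eq alnz[OF y, of i] alnz[OF y, of j] by (simp add: recip_v_def field_simps)
  hence "(B y * M y - A y * N y) * (v i y - v j y) = 0" by (simp add: algebra_simps)
  thus False using Dnz[OF y] vdist[OF y ij] by simp
qed

sublocale hat: lame_setting U gh vh
  by unfold_locales (use U smooth_gh smooth_vh gh_nz vh_dist lame_h in auto)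

end


context recip begin

definition pf :: "'n \<Rightarrow> 'n \<Rightarrow> real^'n \<Rightarrow> real" where
  "pf l j = (\<lambda>y. PA l j y / (M y - N y * v l y) - PD j y / (B y * M y - A y * N y))"

lemma PA_fun: "PA l j = (\<lambda>y. v j y * pd j N y - (pd j N y * v l y + N y * pd j (v l) y))"
  by (rule ext) (simp add: PA_def)
lemma PD_fun: "PD j = (\<lambda>y. pd j B y * M y + B y * (v j y * pd j N y) - (v j y * pd j B y * N y + A y * pd j N y))"
  by (rule ext) (simp add: PD_def)

lemma dPA: "y \<in> U \<Longrightarrow> PA l j differentiable (at y)"
  unfolding PA_fun using dfs by auto
lemma dPD: "y \<in> U \<Longrightarrow> PD j differentiable (at y)"
  unfolding PD_fun using dfs by auto
lemma dal: "y \<in> U \<Longrightarrow> (\<lambda>u. M u - N u * v l u) differentiable (at y)"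
  using dfs by auto
lemma dDe: "y \<in> U \<Longrightarrow> (\<lambda>u. B u * M u - A u * N u) differentiable (at y)"
  using dfs by auto
lemma dpf: "y \<in> U \<Longrightarrow> pf l j differentiable (at y)"
  unfolding pf_def using dPA dPD dal dDe alnz Dnz by auto
lemma daG: "y \<in> U \<Longrightarrow> aG g l j differentiable (at y)"
proof -
  assume y: "y \<in> U"
  have "(\<lambda>u. 2 * g l u) differentiable (at y)" using dfs[OF y] by auto
  thus ?thesis unfolding aG_def[abs_def] using dfs[OF y] gnz[OF y] by auto
qed

lemma aGh_fun: "y \<in> U \<Longrightarrow> aG gh l j y = aG g l j y + pf l j y"
  using aGh unfolding pf_def by simp

lemma pd_aGh:
  assumes x: "x \<in> U"
  shows "pd j (aG gh l j) x = pd j (aG g l j) x + pd j (pf l j) x"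
proof -
  have "pd j (aG gh l j) x = pd j (\<lambda>y. aG g l j y + pf l j y) x"
    by (rule pd_local[OF U x]) (use aGh_fun in auto)
  also have "\<dots> = pd j (aG g l j) x + pd j (pf l j) x"
    using daG[OF x] dpf[OF x] by simp
  finally show ?thesis .
qed

lemma pd_aGg:
  assumes x: "x \<in> U" and lj: "l \<noteq> j"
  shows "pd j (aG g l j) x = (pd j (pd j (v l)) x * (v j x - v l x) - pd j (v l) x * (pd j (v j) x - pd j (v l) x)) / (v j x - v l x)^2"
proof -
  have jl: "j \<noteq> l" using lj by auto
  have "pd j (aG g l j) x = pd j (\<lambda>y. pd j (v l) y / (v j y - v l y)) x"
    by (rule pd_local[OF U x]) (use aGg_lame lj in auto)
  also have "\<dots> = (pd j (pd j (v l)) x * (v j x - v l x) - pd j (v l) x * (pd j (v j) x - pd j (v l) x)) / (v j x - v l x)^2"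
    using dfs[OF x] vdist[OF x jl] by simp
  finally show ?thesis .
qed

lemma pd_PA:
  assumes x: "x \<in> U"
  shows "pd j (PA l j) x = pd j (v j) x * pd j N x + v j x * pd j (pd j N) x - pd j (pd j N) x * v l x
     - 2 * pd j N x * pd j (v l) x - N x * pd j (pd j (v l)) x"
  unfolding PA_fun using dfs[OF x] by simp

lemma pd_PD:
  assumes x: "x \<in> U"
  shows "pd j (PD j) x = pd j (pd j B) x * M x + 2 * pd j B x * (v j x * pd j N x)
     + B x * (pd j (v j) x * pd j N x + v j x * pd j (pd j N) x) - (pd j (v j) x * pd j B x + v j x * pd j (pd j B) x) * N x
     - 2 * (v j x * pd j B x) * pd j N x - A x * pd j (pd j N) x"
  unfolding PD_fun using dfs[OF x] cM[OF x] cA[OF x] by (simp add: algebra_simps)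

lemma pd_pf:
  assumes x: "x \<in> U"
  shows "pd j (pf l j) x =
     (pd j (v j) x * pd j N x + v j x * pd j (pd j N) x - pd j (pd j N) x * v l x - 2 * pd j N x * pd j (v l) x - N x * pd j (pd j (v l)) x) * (1 / (M x - N x * v l x))
   - (v j x * pd j N x - pd j N x * v l x - N x * pd j (v l) x)^2 * (1 / (M x - N x * v l x))^2
   - ((pd j (pd j B) x * M x + 2 * pd j B x * (v j x * pd j N x) + B x * (pd j (v j) x * pd j N x + v j x * pd j (pd j N) x)
        - (pd j (v j) x * pd j B x + v j x * pd j (pd j B) x) * N x - 2 * (v j x * pd j B x) * pd j N x - A x * pd j (pd j N) x)
       * (1 / (B x * M x - A x * N x))
     - (pd j B x * M x + B x * v j x * pd j N x - v j x * pd j B x * N x - A x * pd j N x)^2 * (1 / (B x * M x - A x * N x))^2)"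
proof -
  have q1: "(\<lambda>y. PA l j y / (M y - N y * v l y)) differentiable (at x)"
    using dPA[OF x] dal[OF x] alnz[OF x] by simp
  have q2: "(\<lambda>y. PD j y / (B y * M y - A y * N y)) differentiable (at x)"
    using dPD[OF x] dDe[OF x] Dnz[OF x] by simp
  have "pd j (pf l j) x = pd j (\<lambda>y. PA l j y / (M y - N y * v l y)) x - pd j (\<lambda>y. PD j y / (B y * M y - A y * N y)) x"
    unfolding pf_def by (rule pd_diff[OF q1 q2])
  also have "pd j (\<lambda>y. PA l j y / (M y - N y * v l y)) x
     = (pd j (PA l j) x * (M x - N x * v l x) - PA l j x * pd j (\<lambda>u. M u - N u * v l u) x) / (M x - N x * v l x)^2"
    by (rule pd_divide[OF dPA[OF x] dal[OF x] alnz[OF x]])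
  also have "pd j (\<lambda>y. PD j y / (B y * M y - A y * N y)) x
     = (pd j (PD j) x * (B x * M x - A x * N x) - PD j x * pd j (\<lambda>u. B u * M u - A u * N u) x) / (B x * M x - A x * N x)^2"
    by (rule pd_divide[OF dPD[OF x] dDe[OF x] Dnz[OF x]])
  finally have e: "pd j (pf l j) x = (pd j (PA l j) x * (M x - N x * v l x) - PA l j x * PA l j x) / (M x - N x * v l x)^2
     - (pd j (PD j) x * (B x * M x - A x * N x) - PD j x * PD j x) / (B x * M x - A x * N x)^2"
    unfolding pd_al[OF x] pd_De[OF x] .
  have qs: "\<And>a f g::real. g \<noteq> 0 \<Longrightarrow> (a * g - f * f) / g^2 = a * (1 / g) - f^2 * (1 / g)^2"
    by (simp add: field_simps power2_eq_square)
  have pa: "PA l j x = v j x * pd j N x - pd j N x * v l x - N x * pd j (v l) x" by (simp add: PA_def)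
  have pdd: "PD j x = pd j B x * M x + B x * v j x * pd j N x - v j x * pd j B x * N x - A x * pd j N x" by (simp add: PD_def)
  show ?thesis unfolding e qs[OF alnz[OF x]] qs[OF Dnz[OF x]] pd_PA[OF x] pd_PD[OF x]
    unfolding pa pdd ..
qed

lemma lap_split:
  assumes x: "x \<in> U" and ik: "i \<noteq> k"
  shows "lap_ii g i F x = 1 / g i x * (pd i (pd i F) x - aG g i i x * pd i F x + aG g i k x * g i x * (1 / g k x) * pd k F x)
     - 1 / g i x * (\<Sum>m\<in>UNIV - {i, k}. christoffel g m i i x * pd m F x)"
proof -
  have ki: "k \<noteq> i" using ik by auto
  have c1: "christoffel g i i i x = aG g i i x" by (simp add: chris)
  have c2: "christoffel g k i i x = - aG g i k x * g i x / g k x"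
    using ki gnz[OF x, of i] by (simp add: chris aG_def)
  show ?thesis unfolding lap_ii_def sum_split2[OF ik] c1 c2
    using gnz[OF x, of i] gnz[OF x, of k] by (simp add: field_simps)
qed

lemma grad_sq_split:
  assumes ik: "i \<noteq> k"
  shows "grad_sq g F x = ((pd i F x)^2 * (1 / g i x) + (pd k F x)^2 * (1 / g k x)) + (\<Sum>m\<in>UNIV - {i, k}. 1 / g m x * (pd m F x)^2)"
  unfolding grad_sq_def sum_split2[OF ik] by simp

lemma grad_inner_split:
  assumes ik: "i \<noteq> k"
  shows "grad_inner g N B x = (pd i B x * pd i N x * (1 / g i x) + pd k B x * pd k N x * (1 / g k x))
     + (\<Sum>m\<in>UNIV - {i, k}. 1 / g m x * pd m N x * pd m B x)"
  unfolding grad_inner_def sum_split2[OF ik] by (simp add: mult_ac)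

lemma rest_term:
  assumes x: "x \<in> U" and m: "m \<noteq> i" "m \<noteq> k"
  defines "rhoi \<equiv> (B x * M x - A x * N x) / (M x - N x * v i x)"
    and "rhok \<equiv> (B x * M x - A x * N x) / (M x - N x * v k x)"
    and "hvi \<equiv> recip_v v B A N M i x" and "hvk \<equiv> recip_v v B A N M k x"
  shows "- (aG gh i m x * aG gh k m x / gh m x) + rhoi * rhok * (aG g i m x * aG g k m x / g m x)
     = hvk * rhoi * (- (1 / g i x)) * (christoffel g m i i x * pd m N x)
       + hvi * rhok * (- (1 / g k x)) * (christoffel g m k k x * pd m N x)
       + rhoi * (- (1 / g i x)) * (christoffel g m i i x * pd m B x)
       + rhok * (- (1 / g k x)) * (christoffel g m k k x * pd m B x)
       - hvi * hvk * (1 / g m x * (pd m N x)^2) - 1 / g m x * (pd m B x)^2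
       - (hvi + hvk) * (1 / g m x * pd m N x * pd m B x)"
proof -
  have mi: "i \<noteq> m" "k \<noteq> m" using m by auto
  have vv: "v m x - v i x \<noteq> 0" "v m x - v k x \<noteq> 0" using vdist[OF x] m by auto
  have li: "pd m (v i) x = aG g i m x * (v m x - v i x)" using aGg_lame[OF x mi(1)] vv by simp
  have lk: "pd m (v k) x = aG g k m x * (v m x - v k x)" using aGg_lame[OF x mi(2)] vv by simp
  have ni: "((B x * M x - A x * N x) / (M x - N x * v m x)) * aG gh i m x = rhoi * aG g i m x - (pd m B x + hvi * pd m N x)"
    unfolding aGh[OF x] rhoi_def hvi_def recip_v_def PA_def PD_def
    by (rule neat[OF alnz[OF x] alnz[OF x] Dnz[OF x] li])
  have nk: "((B x * M x - A x * N x) / (M x - N x * v m x)) * aG gh k m x = rhok * aG g k m x - (pd m B x + hvk * pd m N x)"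
    unfolding aGh[OF x] rhok_def hvk_def recip_v_def PA_def PD_def
    by (rule neat[OF alnz[OF x] alnz[OF x] Dnz[OF x] lk])
  have rm: "(B x * M x - A x * N x) / (M x - N x * v m x) \<noteq> 0" using alnz[OF x] Dnz[OF x] by simp
  have ghm: "gh m x = g m x / ((B x * M x - A x * N x) / (M x - N x * v m x))^2"
    using alnz[OF x, of m] Dnz[OF x] by (simp add: recip_g_def power_divide)
  have ci: "christoffel g m i i x = - aG g i m x * g i x / g m x"
    using m gnz[OF x, of i] by (simp add: chris aG_def)
  have ck: "christoffel g m k k x = - aG g k m x * g k x / g m x"
    using m gnz[OF x, of k] by (simp add: chris aG_def)
  show ?thesis unfolding ci ck
    by (rule rest_core[OF ni nk gnz[OF x] rm gnz[OF x] gnz[OF x] refl refl ghm])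
qed


lemma comb:
  fixes CH Lf XL CG Cf XC W r Rf Rr :: real
  assumes "CH = Lf - XL" "CG = Cf - XC" "CG = W" "Lf - r * Cf = Rf - r * W" "- XL + r * XC = Rr"
  shows "CH = Rf + Rr"
  using assms by algebra

lemma rest_sum:
  assumes x: "x \<in> U"
  shows "- (\<Sum>m\<in>UNIV - {i, k}. aG gh i m x * aG gh k m x / gh m x) + (((B x * M x - A x * N x) / (M x - N x * v i x)) * ((B x * M x - A x * N x) / (M x - N x * v k x))) * (\<Sum>m\<in>UNIV - {i, k}. aG g i m x * aG g k m x / g m x) = (recip_v v B A N M k x * ((B x * M x - A x * N x) / (M x - N x * v i x)) * (- (1 / g i x)) * (\<Sum>m\<in>UNIV - {i, k}. christoffel g m i i x * pd m N x) + recip_v v B A N M i x * ((B x * M x - A x * N x) / (M x - N x * v k x)) * (- (1 / g k x)) * (\<Sum>m\<in>UNIV - {i, k}. christoffel g m k k x * pd m N x) + ((B x * M x - A x * N x) / (M x - N x * v i x)) * (- (1 / g i x)) * (\<Sum>m\<in>UNIV - {i, k}. christoffel g m i i x * pd m B x) + ((B x * M x - A x * N x) / (M x - N x * v k x)) * (- (1 / g k x)) * (\<Sum>m\<in>UNIV - {i, k}. christoffel g m k k x * pd m B x) - recip_v v B A N M i x * recip_v v B A N M k x * (\<Sum>m\<in>UNIV - {i, k}. 1 / g m x * (pd m N x)^2) - (\<Sum>m\<in>UNIV - {i, k}. 1 / g m x * (pd m B x)^2) - (recip_v v B A N M i x + recip_v v B A N M k x) * (\<Sum>m\<in>UNIV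 - {i, k}. 1 / g m x * pd m N x * pd m B x))"
proof -
  have "- (\<Sum>m\<in>UNIV - {i, k}. aG gh i m x * aG gh k m x / gh m x) + (((B x * M x - A x * N x) / (M x - N x * v i x)) * ((B x * M x - A x * N x) / (M x - N x * v k x))) * (\<Sum>m\<in>UNIV - {i, k}. aG g i m x * aG g k m x / g m x)
     = (\<Sum>m\<in>UNIV - {i, k}. - (aG gh i m x * aG gh k m x / gh m x) + ((B x * M x - A x * N x) / (M x - N x * v i x)) * ((B x * M x - A x * N x) / (M x - N x * v k x)) * (aG g i m x * aG g k m x / g m x))"
    by (simp add: sum.distrib sum_distrib_left sum_negf sum_subtractf)
  also have "\<dots> = (\<Sum>m\<in>UNIV - {i, k}. recip_v v B A N M k x * ((B x * M x - A x * N x) / (M x - N x * v i x)) * (- (1 / g i x)) * (christoffel g m i i x * pd m N x)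
       + recip_v v B A N M i x * ((B x * M x - A x * N x) / (M x - N x * v k x)) * (- (1 / g k x)) * (christoffel g m k k x * pd m N x)
       + ((B x * M x - A x * N x) / (M x - N x * v i x)) * (- (1 / g i x)) * (christoffel g m i i x * pd m B x)
       + ((B x * M x - A x * N x) / (M x - N x * v k x)) * (- (1 / g k x)) * (christoffel g m k k x * pd m B x)
       - recip_v v B A N M i x * recip_v v B A N M k x * (1 / g m x * (pd m N x)^2) - 1 / g m x * (pd m B x)^2
       - (recip_v v B A N M i x + recip_v v B A N M k x) * (1 / g m x * pd m N x * pd m B x))"
    by (rule sum.cong[OF refl], rule rest_term[OF x]) auto
  also have "\<dots> = (recip_v v B A N M k x * ((B x * M x - A x * N x) / (M x - N x * v i x)) * (- (1 / g i x)) * (\<Sum>m\<in>UNIV - {i, k}. christoffel g m i i x * pd m N x) + recip_v v B A N M i x * ((B x * M x - A x * N x) / (M x - N x * v k x)) * (- (1 / g k x)) * (\<Sum>m\<in>UNIV - {i, k}. christoffel g m k k x * pd m N x) + ((B x * M x - A x * N x) / (M x - N x * v i x)) * (- (1 / g i x)) * (\<Sum>m\<in>UNIV - {i, k}. christoffel g m i i x * pd m B x) + ((B x * M x - A x * N x) / (M x - N x * v k x)) * (- (1 / g k x)) * (\<Sum>m\<in>UNIV - {i, k}. christoffel g m k k x * pd m B x) - recip_v v B A N M i x * recip_v v B A N M k x * (\<Sum>m\<in>UNIV - {i, k}. 1 / g m x * (pd m N x)^2) - (\<Sum>m\<in>UNIV - {i, k}. 1 / g m x * (pd m B x)^2) -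 (recip_v v B A N M i x + recip_v v B A N M k x) * (\<Sum>m\<in>UNIV - {i, k}. 1 / g m x * pd m N x * pd m B x))"
    by (simp add: sum.distrib sum_subtractf sum_distrib_left sum_negf)
  finally show ?thesis .
qed

lemma part2:
  fixes w1 w2 :: "'n \<Rightarrow> real^'n \<Rightarrow> real" and T1 T2 Z1 Z2 P S :: "real^'n \<Rightarrow> real"
  assumes curvR: "\<forall>u\<in>U. \<forall>i k. i \<noteq> k \<longrightarrow>
        curv g i k i k u = w1 i u + w1 k u + w2 i u * v k u + w2 k u * v i u"
    and PS: "\<forall>u\<in>U. P u + S u = grad_inner g N B u + T1 u * N u + T2 u * M u
                                 + Z1 u * B u + Z2 u * A u"
    and x: "x \<in> U" and ik: "i \<noteq> k"
  shows "(let nn = (\<lambda>i. lap_ii g i N x + w1 i x * N x + Z1 x + w2 i x * M x + v i x * Z2 x);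
            bb = (\<lambda>i. lap_ii g i B x + w1 i x * B x + T1 x + w2 i x * A x + v i x * T2 x);
            Q = grad_sq g B x / 2 + B x * T1 x + A x * T2 x;
            RR = grad_sq g N x / 2 + N x * Z1 x + M x * Z2 x;
            hv = (\<lambda>i. recip_v v B A N M i x);
            ratio = (\<lambda>i. (B x * M x - A x * N x) / (M x - N x * v i x));
            hn = (\<lambda>i. ratio i * nn i - P x - hv i * RR);
            hb = (\<lambda>i. ratio i * bb i - Q - hv i * S x)
        in curv (recip_g g v B A N M) i k i k x = hn i * hv k + hn k * hv i + hb i + hb k)"
proof -
  have ki: "k \<noteq> i" using ik by auto
  have vv: "v i x - v k x \<noteq> 0" "v k x - v i x \<noteq> 0" using vdist[OF x ik] by auto
  have qdiv: "\<And>a b c d p q::real. a = c \<Longrightarrow> b = d \<Longrightarrow> a / p - b / q = c * (1 / p) - d * (1 / q)"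
    by simp
  have sq1: "\<And>a b::real. a / b^2 = a * (1 / b)^2" by (simp add: power_divide)
  have sq2: "\<And>a b c::real. a / (b - c)^2 = a * (1 / (c - b))^2" by (simp add: power_divide power2_commute)
  note F = fin_alg[where vi = "v i x" and vk = "v k x" and gi = "g i x" and gk = "g k x" and dii = "pd i (v i) x" and dik = "pd i (v k) x" and dki = "pd k (v i) x" and dkk = "pd k (v k) x" and ddik = "pd i (pd i (v k)) x" and ddki = "pd k (pd k (v i)) x" and aii = "aG g i i x" and akk = "aG g k k x" and B = "B x" and A = "A x" and N = "N x" and M = "M x" and bi = "pd i B x" and bk = "pd k B x" and ni = "pd i N x" and nk = "pd k N x" and bbi = "pd i (pd i B) x" and bbk = "pd k (pd k B) x" and nni = "pd i (pd i N) x" and nnk = "pd k (pd k N) x" and w1i = "w1 i x" and w1k = "w1 k x" and w2i = "w2 i x" and w2k = "w2 k x" and Ta = "T1 x" and Tb = "T2 x" and Za = "Z1 x" and Zb = "Z2 x" and PP = "P x" and igi = "(1 / g i x)" and igk = "(1 / g k x)" and iali = "(1 / (M x - N x * v i x))" and ialk = "(1 / (M x - N x * v k x))" and iDe = "(1 / (B x * M x - A x * N x))" and ivik = "(1 / (v i x - v k x))" and aik = "aG g i k x" and aki = "aG g k i x" and pik = "pf i k x" and pki = "pf k i x" and pii = "pf i i x" and pkk = "pf k k x" and pdaik = "pd i (aG g k i) x" and pdaki = "pd k (aG g i k) x" and pdpik = "pd i (pf k i) x" and pdpki = "pd k (pf i k) x" and lapBi = "((1 / g i x)*((pd i (pd i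 B) x) - (aG g i i x) * (pd i B x) + (aG g i k x) * (g i x) * (1 / g k x) * (pd k B x)))" and lapBk = "((1 / g k x)*((pd k (pd k B) x) - (aG g k k x) * (pd k B x) + (aG g k i x) * (g k x) * (1 / g i x) * (pd i B x)))" and lapNi = "((1 / g i x)*((pd i (pd i N) x) - (aG g i i x) * (pd i N x) + (aG g i k x) * (g i x) * (1 / g k x) * (pd k N x)))" and lapNk = "((1 / g k x)*((pd k (pd k N) x) - (aG g k k x) * (pd k N x) + (aG g k i x) * (g k x) * (1 / g i x) * (pd i N x)))" and PS = "((pd i B x) * (pd i N x) * (1 / g i x) + (pd k B x) * (pd k N x) * (1 / g k x) + (T1 x) * (N x) + (T2 x) * (M x) + (Z1 x) * (B x) + (Z2 x) * (A x))" and Q = "(((pd i B x)^2 * (1 / g i x) + (pd k B x)^2 * (1 / g k x))/2 + (B x) * (T1 x) + (A x) * (T2 x))" and RR = "(((pd i N x)^2 * (1 / g i x) + (pd k N x)^2 * (1 / g k x))/2 + (N x) * (Z1 x) + (M x) * (Z2 x))" and hvi = "recip_v v B A N M i x" and hvk = "recip_v v B A N M k x" and rhoi = "((B x * M x - A x * N x) / (M x - N x * v i x))" and rhok = "((B x * M x - A x * N x) / (M x - N x * v k x))" and De = "(B x * M x - A x * N x)"]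
  have FIN: "- (((B x * M x - A x * N x) / (M x - N x * v i x))^2 * (1 / g i x))*((pd i (aG g k i) x) + (pd i (pf k i) x) + ((aG g k i x)+(pf k i x))^2 - ((aG g k i x)+(pf k i x))*((aG g i i x)+(pf i i x)))
         - (((B x * M x - A x * N x) / (M x - N x * v k x))^2 * (1 / g k x))*((pd k (aG g i k) x) + (pd k (pf i k) x) + ((aG g i k x)+(pf i k x))^2 - ((aG g i k x)+(pf i k x))*((aG g k k x)+(pf k k x)))
      - ((B x * M x - A x * N x) / (M x - N x * v i x)) * ((B x * M x - A x * N x) / (M x - N x * v k x)) * (- (1 / g i x)*((pd i (aG g k i) x) + (aG g k i x)^2 - (aG g k i x) * (aG g i i x)) - (1 / g k x)*((pd k (aG g i k) x) + (aG g i k x)^2 - (aG g i k x) * (aG g k k x))) = (((B x * M x - A x * N x) / (M x - N x * v i x))*(((1 / g i x)*((pd i (pd i N) x) - (aG g i i x) * (pd i N x) + (aG g i k x) * (g i x) * (1 / g k x) * (pd k N x))) + (w1 i x) * (N x) + (Z1 x) + (w2 i x) * (M x) + (v i x) * (Z2 x)) - (P x) - (recip_v v B A N M i x) * (((pd i N x)^2 * (1 / g i x) + (pd k N x)^2 * (1 / g k x))/2 + (N x) * (Z1 x) + (M x) * (Z2 x)))*(recip_v v B A N M k x)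
       + (((B x * M x - A x * N x) / (M x - N x * v k x))*(((1 / g k x)*((pd k (pd k N) x) - (aG g k k x) * (pd k N x) + (aG g k i x) * (g k x) * (1 / g i x) * (pd i N x))) + (w1 k x) * (N x) + (Z1 x) + (w2 k x) * (M x) + (v k x) * (Z2 x)) - (P x) - (recip_v v B A N M k x) * (((pd i N x)^2 * (1 / g i x) + (pd k N x)^2 * (1 / g k x))/2 + (N x) * (Z1 x) + (M x) * (Z2 x)))*(recip_v v B A N M i x)
       + (((B x * M x - A x * N x) / (M x - N x * v i x))*(((1 / g i x)*((pd i (pd i B) x) - (aG g i i x) * (pd i B x) + (aG g i k x) * (g i x) * (1 / g k x) * (pd k B x))) + (w1 i x) * (B x) + (T1 x) + (w2 i x) * (A x) + (v i x) * (T2 x)) - (((pd i B x)^2 * (1 / g i x) + (pd k B x)^2 * (1 / g k x))/2 + (B x) * (T1 x) + (A x) * (T2 x)) - (recip_v v B A N M i x)*(((pd i B x) * (pd i N x) * (1 / g i x) + (pd k B x) * (pd k N x) * (1 / g k x) + (T1 x) * (N x) + (T2 x) * (M x) + (Z1 x) * (B x) + (Z2 x) * (A x)) - (P x)))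
       + (((B x * M x - A x * N x) / (M x - N x * v k x))*(((1 / g k x)*((pd k (pd k B) x) - (aG g k k x) * (pd k B x) + (aG g k i x) * (g k x) * (1 / g i x) * (pd i B x))) + (w1 k x) * (B x) + (T1 x) + (w2 k x) * (A x) + (v k x) * (T2 x)) - (((pd i B x)^2 * (1 / g i x) + (pd k B x)^2 * (1 / g k x))/2 + (B x) * (T1 x) + (A x) * (T2 x)) - (recip_v v B A N M k x)*(((pd i B x) * (pd i N x) * (1 / g i x) + (pd k B x) * (pd k N x) * (1 / g k x) + (T1 x) * (N x) + (T2 x) * (M x) + (Z1 x) * (B x) + (Z2 x) * (A x)) - (P x)))
      - ((B x * M x - A x * N x) / (M x - N x * v i x)) * ((B x * M x - A x * N x) / (M x - N x * v k x)) * ((w1 i x)+(w1 k x)+(w2 i x) * (v k x)+(w2 k x) * (v i x))"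
  proof (rule F)
    show "(1 / g i x) * g i x = 1" "(1 / g k x) * g k x = 1" using gnz[OF x] by auto
    show "(1 / (M x - N x * v i x)) * (M x - N x * v i x) = 1" "(1 / (M x - N x * v k x)) * (M x - N x * v k x) = 1"
      using alnz[OF x] by auto
    show "(1 / (B x * M x - A x * N x)) * (B x * M x - A x * N x) = 1" using Dnz[OF x] by auto
    show "(1 / (v i x - v k x)) * (v i x - v k x) = 1" using vv by auto
    show "aG g i k x = - pd k (v i) x * (1 / (v i x - v k x))"
      using aGg_lame[OF x ik] vv by (simp add: field_simps)
    show "aG g k i x = pd i (v k) x * (1 / (v i x - v k x))"
      using aGg_lame[OF x ki] vv by simp
    show "pf i k x = (v k x * pd k N x - pd k N x * v i x - N x * pd k (v i) x) * (1 / (M x - N x * v i x)) - (pd k B x * M x + B x * v k x * pd k N x - v k x * pd k B x * N x - A x * pd k N x) * (1 / (B x * M x - A x * N x))"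
      unfolding pf_def PA_def PD_def by (rule qdiv) (simp_all add: algebra_simps)
    show "pf k i x = (v i x * pd i N x - pd i N x * v k x - N x * pd i (v k) x) * (1 / (M x - N x * v k x)) - (pd i B x * M x + B x * v i x * pd i N x - v i x * pd i B x * N x - A x * pd i N x) * (1 / (B x * M x - A x * N x))"
      unfolding pf_def PA_def PD_def by (rule qdiv) (simp_all add: algebra_simps)
    show "pf i i x = (- N x * pd i (v i) x) * (1 / (M x - N x * v i x)) - (pd i B x * M x + B x * v i x * pd i N x - v i x * pd i B x * N x - A x * pd i N x) * (1 / (B x * M x - A x * N x))"
      unfolding pf_def PA_def PD_def by (rule qdiv) (simp_all add: algebra_simps)
    show "pf k k x = (- N x * pd k (v k) x) * (1 / (M x - N x * v k x)) - (pd k B x * M x + B x * v k x * pd k N x - v k x * pd k B x * N x - A x * pd k N x) * (1 / (B x * M x - A x * N x))"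
      unfolding pf_def PA_def PD_def by (rule qdiv) (simp_all add: algebra_simps)
    show "pd i (aG g k i) x = (pd i (pd i (v k)) x * (v i x - v k x) - pd i (v k) x * (pd i (v i) x - pd i (v k) x)) * (1 / (v i x - v k x))^2"
      unfolding pd_aGg[OF x ki] by (rule sq1)
    show "pd k (aG g i k) x = (pd k (pd k (v i)) x * (v k x - v i x) - pd k (v i) x * (pd k (v k) x - pd k (v i) x)) * (1 / (v i x - v k x))^2"
      unfolding pd_aGg[OF x ik] by (rule sq2)
    show "pd i (pf k i) x = ((pd i (v i) x) * (pd i N x) + (v i x) * (pd i (pd i N) x) - (pd i (pd i N) x) * (v k x) - 2 * (pd i N x) * (pd i (v k) x) - (N x) * (pd i (pd i (v k)) x))*(1 / (M x - N x * v k x)) - ((v i x) * (pd i N x) - (pd i N x) * (v k x) - (N x) * (pd i (v k) x))^2 * (1 / (M x - N x * v k x))^2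
        - (((pd i (pd i B) x) * (M x) + 2 * (pd i B x)*((v i x) * (pd i N x)) + (B x)*((pd i (v i) x) * (pd i N x) + (v i x) * (pd i (pd i N) x)) - ((pd i (v i) x) * (pd i B x) + (v i x) * (pd i (pd i B) x))*(N x) - 2*((v i x) * (pd i B x))*(pd i N x) - (A x) * (pd i (pd i N) x))*(1 / (B x * M x - A x * N x))
           - ((pd i B x) * (M x) + (B x) * (v i x) * (pd i N x) - (v i x) * (pd i B x) * (N x) - (A x) * (pd i N x))^2 * (1 / (B x * M x - A x * N x))^2)" by (rule pd_pf[OF x])
    show "pd k (pf i k) x = ((pd k (v k) x) * (pd k N x) + (v k x) * (pd k (pd k N) x) - (pd k (pd k N) x) * (v i x) - 2 * (pd k N x) * (pd k (v i) x) - (N x) * (pd k (pd k (v i)) x))*(1 / (M x - N x * v i x)) - ((v k x) * (pd k N x) - (pd k N x) * (v i x) - (N x) * (pd k (v i) x))^2 * (1 / (M x - N x * v i x))^2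
        - (((pd k (pd k B) x) * (M x) + 2 * (pd k B x)*((v k x) * (pd k N x)) + (B x)*((pd k (v k) x) * (pd k N x) + (v k x) * (pd k (pd k N) x)) - ((pd k (v k) x) * (pd k B x) + (v k x) * (pd k (pd k B) x))*(N x) - 2*((v k x) * (pd k B x))*(pd k N x) - (A x) * (pd k (pd k N) x))*(1 / (B x * M x - A x * N x))
           - ((pd k B x) * (M x) + (B x) * (v k x) * (pd k N x) - (v k x) * (pd k B x) * (N x) - (A x) * (pd k N x))^2 * (1 / (B x * M x - A x * N x))^2)" by (rule pd_pf[OF x])
    show "recip_v v B A N M i x = (B x * v i x - A x) * (1 / (M x - N x * v i x))" by (simp add: recip_v_def)
    show "recip_v v B A N M k x = (B x * v k x - A x) * (1 / (M x - N x * v k x))" by (simp add: recip_v_def)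
  qed simp_all
  have ghi: "1 / gh i x = ((B x * M x - A x * N x) / (M x - N x * v i x))^2 * (1 / g i x)" "1 / gh k x = ((B x * M x - A x * N x) / (M x - N x * v k x))^2 * (1 / g k x)"
    using alnz[OF x] Dnz[OF x] gnz[OF x] by (simp_all add: recip_g_def power_divide)
  note C1 = curv_ikik[OF ik hat.dG[OF x] hat.dG[OF x] hat.dpG[OF x] hat.dpG[OF x] gh_nz[OF x]]
  have H1: "curv gh i k i k x = (- (((B x * M x - A x * N x) / (M x - N x * v i x))^2 * (1 / g i x))*((pd i (aG g k i) x) + (pd i (pf k i) x) + ((aG g k i x)+(pf k i x))^2 - ((aG g k i x)+(pf k i x))*((aG g i i x)+(pf i i x)))
         - (((B x * M x - A x * N x) / (M x - N x * v k x))^2 * (1 / g k x))*((pd k (aG g i k) x) + (pd k (pf i k) x) + ((aG g i k x)+(pf i k x))^2 - ((aG g i k x)+(pf i k x))*((aG g k k x)+(pf k k x)))) - (\<Sum>m\<in>UNIV - {i, k}. aG gh i m x * aG gh k m x / gh m x)"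
    unfolding C1 pd_aGh[OF x] aGh_fun[OF x] ghi ..
  note C2 = curv_ikik[OF ik dfs(2)[OF x] dfs(2)[OF x] dfs(8)[OF x] dfs(8)[OF x] gnz[OF x]]
  have H2: "curv g i k i k x = (- (1 / g i x)*((pd i (aG g k i) x) + (aG g k i x)^2 - (aG g k i x) * (aG g i i x)) - (1 / g k x)*((pd k (aG g i k) x) + (aG g i k x)^2 - (aG g i k x) * (aG g k k x))) - (\<Sum>m\<in>UNIV - {i, k}. aG g i m x * aG g k m x / g m x)"
    unfolding C2 ..
  have H3: "curv g i k i k x = ((w1 i x)+(w1 k x)+(w2 i x) * (v k x)+(w2 k x) * (v i x))" using curvR x ik by simp
  have E: "curv gh i k i k x = (((B x * M x - A x * N x) / (M x - N x * v i x))*(((1 / g i x)*((pd i (pd i N) x) - (aG g i i x) * (pd i N x) + (aG g i k x) * (g i x) * (1 / g k x) * (pd k N x))) + (w1 i x) * (N x) + (Z1 x) + (w2 i x) * (M x) + (v i x) * (Z2 x)) - (P x) - (recip_v v B A N M i x) * (((pd i N x)^2 * (1 / g i x) + (pd k N x)^2 * (1 / g k x))/2 + (N x) * (Z1 x) + (M x) * (Z2 x)))*(recip_v v B A N M k x)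
       + (((B x * M x - A x * N x) / (M x - N x * v k x))*(((1 / g k x)*((pd k (pd k N) x) - (aG g k k x) * (pd k N x) + (aG g k i x) * (g k x) * (1 / g i x) * (pd i N x))) + (w1 k x) * (N x) + (Z1 x) + (w2 k x) * (M x) + (v k x) * (Z2 x)) - (P x) - (recip_v v B A N M k x) * (((pd i N x)^2 * (1 / g i x) + (pd k N x)^2 * (1 / g k x))/2 + (N x) * (Z1 x) + (M x) * (Z2 x)))*(recip_v v B A N M i x)
       + (((B x * M x - A x * N x) / (M x - N x * v i x))*(((1 / g i x)*((pd i (pd i B) x) - (aG g i i x) * (pd i B x) + (aG g i k x) * (g i x) * (1 / g k x) * (pd k B x))) + (w1 i x) * (B x) + (T1 x) + (w2 i x) * (A x) + (v i x) * (T2 x)) - (((pd i B x)^2 * (1 / g i x) + (pd k B x)^2 * (1 / g k x))/2 + (B x) * (T1 x) + (A x) * (T2 x)) - (recip_v v B A N M i x)*(((pd i B x) * (pd i N x) * (1 / g i x) + (pd k B x) * (pd k N x) * (1 / g k x) + (T1 x) * (N x) + (T2 x) * (M x) + (Z1 x) * (B x) + (Z2 x) * (A x)) - (P x)))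
       + (((B x * M x - A x * N x) / (M x - N x * v k x))*(((1 / g k x)*((pd k (pd k B) x) - (aG g k k x) * (pd k B x) + (aG g k i x) * (g k x) * (1 / g i x) * (pd i B x))) + (w1 k x) * (B x) + (T1 x) + (w2 k x) * (A x) + (v k x) * (T2 x)) - (((pd i B x)^2 * (1 / g i x) + (pd k B x)^2 * (1 / g k x))/2 + (B x) * (T1 x) + (A x) * (T2 x)) - (recip_v v B A N M k x)*(((pd i B x) * (pd i N x) * (1 / g i x) + (pd k B x) * (pd k N x) * (1 / g k x) + (T1 x) * (N x) + (T2 x) * (M x) + (Z1 x) * (B x) + (Z2 x) * (A x)) - (P x))) + (recip_v v B A N M k x * ((B x * M x - A x * N x) / (M x - N x * v i x)) * (- (1 / g i x)) * (\<Sum>m\<in>UNIV - {i, k}. christoffel g m i i x * pd m N x) + recip_v v B A N M i x * ((B x * M x - A x * N x) / (M x - N x * v k x)) * (- (1 / g k x)) * (\<Sum>m\<in>UNIV - {i, k}. christoffel g m k k x * pd m N x) + ((B x * M x - A x * N x) / (M x - N x * v i x)) * (- (1 / g i x)) * (\<Sum>m\<in>UNIV - {i, k}. christoffel g m i i x * pd m B x) + ((B x * M x - A x * N x) / (M x - N x * v k x)) * (- (1 / g k x)) * (\<Sum>m\<in>UNIV - {i, k}. christoffel g m k k x * pd m B x) - recip_v v B A N M i x * recip_v v B A N M k x * (\<Sum>m\<in>UNIV - {i, k}. 1 / g m x * (pd m N x)^2) - (\<Sum>m\<in>UNIV - {i, k}. 1 / g m x * (pd m B x)^2) - (recip_v v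 B A N M i x + recip_v v B A N M k x) * (\<Sum>m\<in>UNIV - {i, k}. 1 / g m x * pd m N x * pd m B x))"
    by (rule comb[OF H1 H2 H3 FIN rest_sum[OF x]])
  have Sx: "S x = grad_inner g N B x + T1 x * N x + T2 x * M x + Z1 x * B x + Z2 x * A x - P x"
    using PS x by (simp add: algebra_simps)
  have ss: "UNIV - {k, i} = UNIV - {i, k}" by auto
  show ?thesis unfolding Let_def E Sx lap_split[OF x ik] lap_split[OF x ki] grad_sq_split[OF ik] grad_inner_split[OF ik] ss
    by algebra
qed

end


theorem theorem3p2:
  fixes U :: "(real^'n) set"
    and v g w1 w2 :: "'n \<Rightarrow> real^'n \<Rightarrow> real"
    and A B M N T1 T2 Z1 Z2 P S :: "real^'n \<Rightarrow> real"
  assumes U_open: "open U"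
    and hyp: "strictly_hyperbolic U v"
    and DN: "DN_system U v"
    and metric: "metric_of_system U v g"
    and aff1: "is_affinor U g w1"
    and aff2: "is_affinor U g w2"
    and curvR: "\<forall>u\<in>U. \<forall>i k. i \<noteq> k \<longrightarrow>
        curv g i k i k u = w1 i u + w1 k u + w2 i u * v k u + w2 k u * v i u"
    and claw1: "conservation_law U v B A"
    and claw2: "conservation_law U v N M"
    and nondeg: "\<forall>u\<in>U. B u * M u - A u * N u \<noteq> 0"
    and denom: "\<forall>u\<in>U. \<forall>i. M u - N u * v i u \<noteq> 0"
    and T1: "smooth_on U T1" "\<forall>u\<in>U. \<forall>i. pd i T1 u = w1 i u * pd i B u"
    and T2: "smooth_on U T2" "\<forall>u\<in>U. \<forall>i. pd i T2 u = w2 i u * pd i B u"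
    and Z1: "smooth_on U Z1" "\<forall>u\<in>U. \<forall>i. pd i Z1 u = w1 i u * pd i N u"
    and Z2: "smooth_on U Z2" "\<forall>u\<in>U. \<forall>i. pd i Z2 u = w2 i u * pd i N u"
    and PS: "\<forall>u\<in>U. P u + S u = grad_inner g N B u + T1 u * N u + T2 u * M u
                                 + Z1 u * B u + Z2 u * A u"
  shows "\<forall>u\<in>U.
     (\<forall>i j k l. \<not> (i \<noteq> j \<and> {i, j} = {k, l}) \<longrightarrow>
         curv (recip_g g v B A N M) i j k l u = 0) \<and>
     (\<forall>i k. i \<noteq> k \<longrightarrow>
       (let nn = (\<lambda>i. lap_ii g i N u + w1 i u * N u + Z1 u + w2 i u * M u + v i u * Z2 u);
            bb = (\<lambda>i. lap_ii g i B u + w1 i u * B u + T1 u + w2 i u * A u + v i u * T2 u);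
            Q = grad_sq g B u / 2 + B u * T1 u + A u * T2 u;
            RR = grad_sq g N u / 2 + N u * Z1 u + M u * Z2 u;
            hv = (\<lambda>i. recip_v v B A N M i u);
            ratio = (\<lambda>i. (B u * M u - A u * N u) / (M u - N u * v i u));
            hn = (\<lambda>i. ratio i * nn i - P u - hv i * RR);
            hb = (\<lambda>i. ratio i * bb i - Q - hv i * S u)
        in curv (recip_g g v B A N M) i k i k u = hn i * hv k + hn k * hv i + hb i + hb k))"
  proof -
  interpret recip U v g A B M N
    by unfold_locales (use U_open hyp metric claw1 claw2 nondeg denom in auto)
  show ?thesis
  proof (intro ballI conjI allI impI)
    fix u and i j k l :: 'n assume u: "u \<in> U" and nc: "\<not> (i \<noteq> j \<and> {i, j} = {k, l})"
    show "curv (recip_g g v B A N M) i j k l u = 0" by (rule hat.van[OF u nc])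
  next
    fix u and i k :: 'n assume u: "u \<in> U" and ik: "i \<noteq> k"
    show "let nn = (\<lambda>i. lap_ii g i N u + w1 i u * N u + Z1 u + w2 i u * M u + v i u * Z2 u);
            bb = (\<lambda>i. lap_ii g i B u + w1 i u * B u + T1 u + w2 i u * A u + v i u * T2 u);
            Q = grad_sq g B u / 2 + B u * T1 u + A u * T2 u;
            RR = grad_sq g N u / 2 + N u * Z1 u + M u * Z2 u;
            hv = (\<lambda>i. recip_v v B A N M i u);
            ratio = (\<lambda>i. (B u * M u - A u * N u) / (M u - N u * v i u));
            hn = (\<lambda>i. ratio i * nn i - P u - hv i * RR);
            hb = (\<lambda>i. ratio i * bb i - Q - hv i * S u)
        in curv (recip_g g v B A N M) i k i k u = hn i * hv k + hn k * hv i + hb i + hb k"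
      by (rule part2[OF curvR PS u ik])
  qed
qed

end
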